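(* Let $\Gamma$ be a countable sofic group and $s_1,s_2,\dots$ a generating sequence of $\Gamma$. Consider the Bernoulli shift $\theta$ of $\Gamma$ on $\{0,1\}^\Gamma$ with the product of uniform measures, $\theta(f,\gamma)(\delta)=f(\gamma\delta)$, identified with $(X,\mu)$ via a fixed enumeration of $\Gamma$, and regarded as an action of $\mathbb F_\infty$ via $\gamma_i\mapsto s_i$. Then this action is sofic; in particular the orbit equivalence relation of the Bernoulli shift of a sofic group is a sofic equivalence relation.
   Context: A countable group $\Gamma$ is sofic if for every $0<\varepsilon<1$ and every finite $F\subseteq\Gamma$ there are $n$ and a map $\phi:\Gamma\to S_n$ with: $\phi(e)\phi(f)\phi(ef)^{-1}$ has at least $(1-\varepsilon)n$ fixed points for all $e,f\in F$; $\phi(1)=1$; and $\phi(e)$ has at most $\varepsilon n$ fixed points for every $1\ne e\in F$. $X=\{0,1\}^{\mathbb N}$ with product uniform measure $\mu$; $\mathbb F_\infty$ free on $\gamma_1,\gamma_2,\dots$; $W_r$ the reduced words of length $\le r$ in $\gamma_1^{\pm1},\dots,\gamma_r^{\pm1}$. For an action $\theta$ of $\mathbb F_\infty$ on $X$ or on a finite set $Y$ whose points carry labels in $\{0,1\}^{\mathbb N}$ (points of $X$ labelled by themselves), $B^r_r(x)$ is the rooted directed multigraph on vertex set $\theta(W_r,x)$, root $x$, with an edge $y\to\theta(\gamma_i^\epsilon,y)$ coloured $\gamma_i^\epsilon$ for each vertex $y$, $i\le r$, $\epsilon=\pm1$ with $\theta(\gamma_i^\epsilon,y)$ a vertex, vertices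 labelled by the first $r$ digits of their labels; $U^{r,r}$ is the finite set of isomorphism types; $p_\alpha(\theta)$ is the measure (on $X$) resp. proportion (on $Y$) of $x$ with $B^r_r(x)\cong\alpha$. A $\mu$-preserving Borel action $\theta$ on $X$ is sofic if there are actions $\theta_n$ on labelled finite sets with $p_\alpha(\theta_n)\to p_\alpha(\theta)$ for all $r\ge1$, $\alpha\in U^{r,r}$. A $\mu$-preserving countable Borel equivalence relation on $X$ is sofic if it is the orbit relation of a sofic action. *)

theory Defs
  imports "HOL-Probability.Probability" "HOL-Algebra.Generated_Groups"
          "HOL-Combinatorics.Permutations"
begin

text \<open>Maps into S_n are modelled as maps into permutations of the set {0..<n}.
  The permutation phi(a) phi(b) phi(ab)^{-1} is the composition of functions.
  We require n > 0 (S_0 is not meant).\<close>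

definition sofic_group :: "('a, 'b) monoid_scheme \<Rightarrow> bool" where
  "sofic_group G \<longleftrightarrow>
     (\<forall>\<epsilon>::real. 0 < \<epsilon> \<and> \<epsilon> < 1 \<longrightarrow>
       (\<forall>F. finite F \<and> F \<subseteq> carrier G \<longrightarrow>
         (\<exists>n::nat. n > 0 \<and> (\<exists>\<phi> :: 'a \<Rightarrow> nat \<Rightarrow> nat.
            (\<forall>g\<in>carrier G. \<phi> g permutes {..<n}) \<and>
            \<phi> \<one>\<^bsub>G\<^esub> = id \<and>
            (\<forall>a\<in>F. \<forall>b\<in>F.
               real (card {k\<in>{..<n}. (\<phi> a \<circ> \<phi> b \<circ> inv_into UNIV (\<phi> (a \<otimes>\<^bsub>G\<^esub> b))) k = k})
                 \<ge> (1 - \<epsilon>) * real n) \<and>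
            (\<forall>a\<in>F. a \<noteq> \<one>\<^bsub>G\<^esub> \<longrightarrow>
               real (card {k\<in>{..<n}. \<phi> a k = k}) \<le> \<epsilon> * real n)))))"

text \<open>An action of F_infinity on a set S is given by the actions T i of the free
  generators gamma_i (i >= 1), which are bijections of S.  A letter (i, True) stands
  for gamma_i, (i, False) for gamma_i^{-1}.\<close>

type_synonym letter = "nat \<times> bool"

definition reduced_words :: "nat \<Rightarrow> letter list set" where
  "reduced_words r = {w. length w \<le> r \<and> (\<forall>a\<in>set w. fst a \<in> {1..r}) \<and>
     (\<forall>j. Suc j < length w \<longrightarrow>
        \<not> (fst (w ! j) = fst (w ! Suc j) \<and> snd (w ! j) \<noteq> snd (w ! Suc j)))}"

definition act_letter :: "'s set \<Rightarrow> (nat \<Rightarrow> 's \<Rightarrow> 's) \<Rightarrow> letter \<Rightarrow> 's \<Rightarrow> 's" where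
  "act_letter S T a y = (if snd a then T (fst a) y else inv_into S (T (fst a)) y)"

definition act_word :: "'s set \<Rightarrow> (nat \<Rightarrow> 's \<Rightarrow> 's) \<Rightarrow> letter list \<Rightarrow> 's \<Rightarrow> 's" where
  "act_word S T w y = foldr (act_letter S T) w y"

text \<open>Rooted, vertex-labelled, edge-coloured directed multigraphs:
  (vertex set, root, coloured edges (E y a = Some z: edge y -> z of colour a), labels).\<close>

type_synonym 'v rgraph = "'v set \<times> 'v \<times> ('v \<Rightarrow> letter \<Rightarrow> 'v option) \<times> ('v \<Rightarrow> bool list)"

definition rgraph_iso :: "'v rgraph \<Rightarrow> 'w rgraph \<Rightarrow> bool" where
  "rgraph_iso A B = (case A of (V, x, E, lab) \<Rightarrow> case B of (V', x', E', lab') \<Rightarrow>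
     (\<exists>\<phi>. bij_betw \<phi> V V' \<and> \<phi> x = x' \<and>
        (\<forall>y\<in>V. lab' (\<phi> y) = lab y \<and> (\<forall>a. E' (\<phi> y) a = map_option \<phi> (E y a)))))"

definition ball_graph ::
  "nat \<Rightarrow> 's set \<Rightarrow> (nat \<Rightarrow> 's \<Rightarrow> 's) \<Rightarrow> ('s \<Rightarrow> nat \<Rightarrow> bool) \<Rightarrow> 's \<Rightarrow> 's rgraph" where
  "ball_graph r S T L x =
     (let V = (\<lambda>w. act_word S T w x) ` reduced_words r in
      (V, x,
       (\<lambda>y a. if y \<in> V \<and> fst a \<in> {1..r} \<and> act_letter S T a y \<in> V
              then Some (act_letter S T a y) else None),
       (\<lambda>y. map (L y) [0..<r])))"

definition cantor_measure :: "(nat \<Rightarrow> bool) measure" where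
  "cantor_measure = PiM UNIV (\<lambda>_::nat. measure_pmf (pmf_of_set (UNIV :: bool set)))"

definition p_meas :: "nat \<Rightarrow> (nat \<Rightarrow> (nat \<Rightarrow> bool) \<Rightarrow> (nat \<Rightarrow> bool)) \<Rightarrow> 'v rgraph \<Rightarrow> real" where
  "p_meas r T \<alpha> = measure cantor_measure
     {x \<in> space cantor_measure. rgraph_iso (ball_graph r UNIV T (\<lambda>x. x) x) \<alpha>}"

definition p_fin ::
  "nat \<Rightarrow> 's set \<Rightarrow> (nat \<Rightarrow> 's \<Rightarrow> 's) \<Rightarrow> ('s \<Rightarrow> nat \<Rightarrow> bool) \<Rightarrow> 'v rgraph \<Rightarrow> real" where
  "p_fin r Y T L \<alpha> = real (card {y \<in> Y. rgraph_iso (ball_graph r Y T L y) \<alpha>}) / real (card Y)"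

definition mpres :: "((nat \<Rightarrow> bool) \<Rightarrow> (nat \<Rightarrow> bool)) \<Rightarrow> bool" where
  "mpres f \<longleftrightarrow> f \<in> cantor_measure \<rightarrow>\<^sub>M cantor_measure \<and>
     distr cantor_measure cantor_measure f = cantor_measure"

definition mp_borel_action :: "(nat \<Rightarrow> (nat \<Rightarrow> bool) \<Rightarrow> (nat \<Rightarrow> bool)) \<Rightarrow> bool" where
  "mp_borel_action T \<longleftrightarrow> (\<forall>i\<ge>1. bij (T i) \<and>
      mpres (T i) \<and> mpres (inv_into UNIV (T i)))"

text \<open>Isomorphism types alpha in U^{r,r} are represented by rooted graphs on vertices in nat
  (every finite type has such a representative); graphs which are not of the form B^r_r
  have p = 0 on both sides, so quantifying over all of them is harmless.\<close>

definition sofic_action :: "(nat \<Rightarrow> (nat \<Rightarrow> bool) \<Rightarrow> (nat \<Rightarrow> bool)) \<Rightarrow> bool" where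
  "sofic_action T \<longleftrightarrow> mp_borel_action T \<and>
     (\<exists>(Y :: nat \<Rightarrow> nat set) (TT :: nat \<Rightarrow> nat \<Rightarrow> nat \<Rightarrow> nat) (L :: nat \<Rightarrow> nat \<Rightarrow> nat \<Rightarrow> bool).
        (\<forall>n. finite (Y n) \<and> Y n \<noteq> {} \<and> (\<forall>i\<ge>1. bij_betw (TT n i) (Y n) (Y n))) \<and>
        (\<forall>r\<ge>1. \<forall>\<alpha> :: nat rgraph.
           (\<lambda>n. p_fin r (Y n) (TT n) (L n) \<alpha>) \<longlonglongrightarrow> p_meas r T \<alpha>))"

definition orbit_rel :: "(nat \<Rightarrow> (nat \<Rightarrow> bool) \<Rightarrow> (nat \<Rightarrow> bool)) \<Rightarrow> ((nat \<Rightarrow> bool) \<times> (nat \<Rightarrow> bool)) set" where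
  "orbit_rel T = {(x, y). \<exists>w. (\<forall>a\<in>set w. fst a \<ge> 1) \<and> y = act_word UNIV T w x}"

definition sofic_eqrel :: "((nat \<Rightarrow> bool) \<times> (nat \<Rightarrow> bool)) set \<Rightarrow> bool" where
  "sofic_eqrel R \<longleftrightarrow> (\<exists>T. sofic_action T \<and> R = orbit_rel T)"

text \<open>theta(f, g)(delta) = f(g delta) on {0,1}^Gamma, transported to X = {0,1}^nat via the
  enumeration e : nat -> Gamma (x corresponds to f = x o e^{-1}).\<close>

definition bshift :: "('a, 'b) monoid_scheme \<Rightarrow> (nat \<Rightarrow> 'a) \<Rightarrow> 'a \<Rightarrow> (nat \<Rightarrow> bool) \<Rightarrow> (nat \<Rightarrow> bool)" where
  "bshift G e g x = (\<lambda>k. x (inv_into UNIV e (g \<otimes>\<^bsub>G\<^esub> e k)))"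

end

theory Submission
  imports Defs
begin

definition wbig :: "nat \<Rightarrow> letter list set" where
  "wbig r = {u. length u \<le> Suc r \<and> (\<forall>a\<in>set u. fst a \<in> {1..r})}"

lemma act_word_Nil[simp]: "act_word S T [] y = y"
  by (simp add: act_word_def)

lemma act_word_Cons[simp]: "act_word S T (a#w) y = act_letter S T a (act_word S T w y)"
  by (simp add: act_word_def)

lemma reduced_sub_wbig: "reduced_words r \<subseteq> wbig r"
  by (auto simp: reduced_words_def wbig_def)

lemma Nil_reduced[simp]: "[] \<in> reduced_words r"
  by (simp add: reduced_words_def)

lemma Cons_wbig: "w \<in> reduced_words r \<Longrightarrow> fst a \<in> {1..r} \<Longrightarrow> a # w \<in> wbig r"
  by (auto simp: reduced_words_def wbig_def)

lemma finite_wbig: "finite (wbig r)"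
proof -
  have "wbig r \<subseteq> {u. set u \<subseteq> ({1..r} \<times> UNIV) \<and> length u \<le> Suc r}"
    by (auto simp: wbig_def)
  moreover have "finite {u. set u \<subseteq> ({1..r} \<times> (UNIV::bool set)) \<and> length u \<le> Suc r}"
    by (rule finite_lists_length_le) auto
  ultimately show ?thesis by (rule finite_subset)
qed

lemma finite_reduced: "finite (reduced_words r)"
  using finite_subset[OF reduced_sub_wbig finite_wbig] .

lemma gen_iso:
  assumes pat: "\<And>u u'. u \<in> wbig r \<Longrightarrow> u' \<in> wbig r \<Longrightarrow>
      (act_word S T u x = act_word S T u' x) = (act_word S' T' u x' = act_word S' T' u' x')"
    and lab: "\<And>w k. w \<in> reduced_words r \<Longrightarrow> k < r \<Longrightarrow>
      L' (act_word S' T' w x') k = L (act_word S T w x) k"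
  shows "rgraph_iso (ball_graph r S T L x) (ball_graph r S' T' L' x')"
proof -
  let ?A = "\<lambda>w. act_word S T w x"
  let ?B = "\<lambda>w. act_word S' T' w x'"
  let ?R = "reduced_words r"
  define \<psi> where "\<psi> y = ?B (SOME w. w \<in> ?R \<and> ?A w = y)" for y
  have pat': "?A u = ?A u' \<longleftrightarrow> ?B u = ?B u'" if "u \<in> ?R" "u' \<in> ?R" for u u'
    using pat that reduced_sub_wbig by blast
  have key: "\<psi> (?A w) = ?B w" if "w \<in> ?R" for w
  proof -
    have "\<exists>w'. w' \<in> ?R \<and> ?A w' = ?A w" using that by blast
    then have "(SOME w'. w' \<in> ?R \<and> ?A w' = ?A w) \<in> ?R \<and> ?A (SOME w'. w' \<in> ?R \<and> ?A w' = ?A w) = ?A w"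
      by (rule someI_ex)
    then show ?thesis unfolding \<psi>_def using pat' that by blast
  qed
  have bij: "bij_betw \<psi> (?A ` ?R) (?B ` ?R)"
  proof (rule bij_betw_imageI)
    show "inj_on \<psi> (?A ` ?R)"
      by (auto simp: inj_on_def key pat')
    show "\<psi> ` ?A ` ?R = ?B ` ?R"
      by (auto simp: image_image key)
  qed
  have root: "\<psi> x = x'" using key[of "[]"] by simp
  have edge: "(if \<psi> (?A w) \<in> ?B ` ?R \<and> fst a \<in> {1..r} \<and> act_letter S' T' a (\<psi> (?A w)) \<in> ?B ` ?R
          then Some (act_letter S' T' a (\<psi> (?A w))) else None)
      = map_option \<psi> (if ?A w \<in> ?A ` ?R \<and> fst a \<in> {1..r} \<and> act_letter S T a (?A w) \<in> ?A ` ?R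
          then Some (act_letter S T a (?A w)) else None)" if w: "w \<in> ?R" for w a
  proof (cases "fst a \<in> {1..r}")
    case False then show ?thesis by (simp only: if_False simp_thms) (simp add: False)
  next
    case True
    have aw: "a # w \<in> wbig r" using Cons_wbig[OF w True] .
    have e1: "act_letter S' T' a (\<psi> (?A w)) = ?B (a#w)" using key[OF w] by simp
    have e2: "act_letter S T a (?A w) = ?A (a#w)" by simp
    have iff: "?B (a#w) \<in> ?B ` ?R \<longleftrightarrow> ?A (a#w) \<in> ?A ` ?R"
    proof -
      have "?B (a#w) \<in> ?B ` ?R \<longleftrightarrow> (\<exists>w'\<in>?R. ?B (a#w) = ?B w')" by blast
      also have "\<dots> \<longleftrightarrow> (\<exists>w'\<in>?R. ?A (a#w) = ?A w')"
        using pat[OF aw] reduced_sub_wbig by blast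
      finally show ?thesis by blast
    qed
    have psi: "\<psi> (?A (a#w)) = ?B (a#w)" if "?A (a#w) \<in> ?A ` ?R"
    proof -
      from that obtain w' where w': "w' \<in> ?R" "?A (a#w) = ?A w'" by blast
      then have "?B (a#w) = ?B w'" using pat[OF aw] reduced_sub_wbig by blast
      then show ?thesis using w' key by simp
    qed
    have m1: "\<psi> (?A w) \<in> ?B ` ?R" using key[OF w] w by auto
    have m2: "?A w \<in> ?A ` ?R" using w by auto
    show ?thesis
    proof (cases "?A (a#w) \<in> ?A ` ?R")
      case True2: True
      then show ?thesis using True m1 m2 iff psi[OF True2] e1 e2 by (simp del: act_word_Cons)
    next
      case False2: False
      then show ?thesis using True m1 m2 iff e1 e2 by (simp del: act_word_Cons)
    qed
  qed
  show ?thesis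
    unfolding rgraph_iso_def ball_graph_def Let_def prod.case
  proof (rule exI[of _ \<psi>], intro conjI ballI allI)
    show "bij_betw \<psi> (?A ` ?R) (?B ` ?R)" by (rule bij)
    show "\<psi> x = x'" by (rule root)
  next
    fix y assume "y \<in> ?A ` ?R"
    then obtain w where w: "w \<in> ?R" "y = ?A w" by blast
    show "map (L' (\<psi> y)) [0..<r] = map (L y) [0..<r]"
      using w key lab by simp
  next
    fix y a assume "y \<in> ?A ` ?R"
    then obtain w where w: "w \<in> ?R" "y = ?A w" by blast
    show "(if \<psi> y \<in> ?B ` ?R \<and> fst a \<in> {1..r} \<and> act_letter S' T' a (\<psi> y) \<in> ?B ` ?R
          then Some (act_letter S' T' a (\<psi> y)) else None)
      = map_option \<psi> (if y \<in> ?A ` ?R \<and> fst a \<in> {1..r} \<and> act_letter S T a y \<in> ?A ` ?R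
          then Some (act_letter S T a y) else None)"
      unfolding w(2) by (rule edge[OF w(1)])
  qed
qed

lemma rgraph_iso_trans:
  assumes "rgraph_iso A B" "rgraph_iso B C" shows "rgraph_iso A C"
proof -
  obtain V x E lab where A: "A = (V, x, E, lab)" by (cases A) auto
  obtain V' x' E' lab' where B: "B = (V', x', E', lab')" by (cases B) auto
  obtain V'' x'' E'' lab'' where C: "C = (V'', x'', E'', lab'')" by (cases C) auto
  from assms(1) obtain \<phi> where \<phi>: "bij_betw \<phi> V V'" "\<phi> x = x'"
    "\<forall>y\<in>V. lab' (\<phi> y) = lab y \<and> (\<forall>a. E' (\<phi> y) a = map_option \<phi> (E y a))"
    by (auto simp: rgraph_iso_def A B)
  from assms(2) obtain \<theta> where \<theta>: "bij_betw \<theta> V' V''" "\<theta> x' = x''"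
    "\<forall>y\<in>V'. lab'' (\<theta> y) = lab' y \<and> (\<forall>a. E'' (\<theta> y) a = map_option \<theta> (E' y a))"
    by (auto simp: rgraph_iso_def B C)
  show ?thesis
    unfolding rgraph_iso_def A C prod.case
  proof (rule exI[of _ "\<theta> \<circ> \<phi>"], intro conjI ballI allI)
    show "bij_betw (\<theta> \<circ> \<phi>) V V''" using \<phi>(1) \<theta>(1) by (rule bij_betw_trans)
    show "(\<theta> \<circ> \<phi>) x = x''" using \<phi>(2) \<theta>(2) by simp
  next
    fix y assume y: "y \<in> V"
    have y': "\<phi> y \<in> V'" using \<phi>(1) y by (meson bij_betwE)
    show "lab'' ((\<theta> \<circ> \<phi>) y) = lab y" using \<phi>(3) \<theta>(3) y y' by simp
    fix a
    show "E'' ((\<theta> \<circ> \<phi>) y) a = map_option (\<theta> \<circ> \<phi>) (E y a)"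
    proof -
      have "E'' (\<theta> (\<phi> y)) a = map_option \<theta> (E' (\<phi> y) a)" using \<theta>(3) y' by blast
      also have "E' (\<phi> y) a = map_option \<phi> (E y a)" using \<phi>(3) y by blast
      finally show ?thesis by (simp add: option.map_comp)
    qed
  qed
qed

lemma act_word_in:
  assumes "\<And>i. i \<in> {1..r} \<Longrightarrow> bij_betw (T i) Z Z" "z \<in> Z" "\<forall>a\<in>set u. fst a \<in> {1..r}"
  shows "act_word Z T u z \<in> Z"
  using assms(3)
proof (induction u)
  case Nil then show ?case using assms(2) by simp
next
  case (Cons a u)
  then have u: "act_word Z T u z \<in> Z" and a: "fst a \<in> {1..r}" by auto
  have b: "bij_betw (T (fst a)) Z Z" using assms(1) a .
  show ?case
  proof (cases "snd a")
    case True then show ?thesis using u b by (simp add: act_letter_def bij_betwE)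
  next
    case False
    have "inv_into Z (T (fst a)) (act_word Z T u z) \<in> Z"
      using b u by (metis bij_betw_def inv_into_into)
    then show ?thesis using False by (simp add: act_letter_def)
  qed
qed

lemma transport_word:
  assumes f: "bij_betw f Z Y" and T: "\<And>i. i \<in> {1..r} \<Longrightarrow> bij_betw (T i) Z Z"
    and T': "\<And>i y. y \<in> Y \<Longrightarrow> T' i y = f (T i (inv_into Z f y))"
    and z: "z \<in> Z" and u: "\<forall>a\<in>set u. fst a \<in> {1..r}"
  shows "act_word Y T' u (f z) = f (act_word Z T u z)"
  using u
proof (induction u)
  case Nil then show ?case by simp
next
  case (Cons a u)
  then have u: "\<forall>a\<in>set u. fst a \<in> {1..r}" and a: "fst a \<in> {1..r}" by auto
  have IH: "act_word Y T' u (f z) = f (act_word Z T u z)" using Cons u by simp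
  define w where "w = act_word Z T u z"
  have w: "w \<in> Z" unfolding w_def by (rule act_word_in[OF T z u])
  have b: "bij_betw (T (fst a)) Z Z" using T a .
  have fi: "inj_on f Z" using f by (simp add: bij_betw_def)
  have fw: "f w \<in> Y" using f w by (meson bij_betwE)
  have inv_f: "inv_into Z f (f v) = v" if "v \<in> Z" for v using fi that by (simp add: inv_into_f_f)
  show ?case
  proof (cases "snd a")
    case True
    then show ?thesis using IH T'[OF fw] inv_f[OF w] by (simp add: act_letter_def w_def)
  next
    case False
    define v where "v = inv_into Z (T (fst a)) w"
    have v: "v \<in> Z" "T (fst a) v = w" using b w unfolding v_def
      by (metis bij_betw_def inv_into_into, metis bij_betw_def f_inv_into_f)
    have fv: "f v \<in> Y" using f v(1) by (meson bij_betwE)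
    have T'Y: "T' (fst a) y \<in> Y" if "y \<in> Y" for y
    proof -
      have "inv_into Z f y \<in> Z" using f that by (metis bij_betw_def inv_into_into)
      then have "T (fst a) (inv_into Z f y) \<in> Z" using b by (meson bij_betwE)
      then show ?thesis unfolding T'[OF that] using f by (meson bij_betwE)
    qed
    have injT': "inj_on (T' (fst a)) Y"
    proof (rule inj_onI)
      fix y1 y2 assume y: "y1 \<in> Y" "y2 \<in> Y" "T' (fst a) y1 = T' (fst a) y2"
      have z1: "inv_into Z f y1 \<in> Z" "inv_into Z f y2 \<in> Z" using f y by (metis bij_betw_def inv_into_into)+
      have "T (fst a) (inv_into Z f y1) \<in> Z" "T (fst a) (inv_into Z f y2) \<in> Z" using b z1 by (meson bij_betwE)+
      then have "T (fst a) (inv_into Z f y1) = T (fst a) (inv_into Z f y2)"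
        using y T' fi by (simp add: inj_on_def)
      then have "inv_into Z f y1 = inv_into Z f y2" using b z1 by (simp add: bij_betw_def inj_on_def)
      then show "y1 = y2" using y f by (metis bij_betw_def f_inv_into_f)
    qed
    have "T' (fst a) (f v) = f w" using T'[OF fv] inv_f[OF v(1)] v(2) by simp
    then have "inv_into Y (T' (fst a)) (f w) = f v"
      using injT' fv by (metis inv_into_f_f)
    then show ?thesis using IH False by (simp add: act_letter_def w_def v_def)
  qed
qed

lemma transport_iso:
  assumes f: "bij_betw f Z Y" and T: "\<And>i. i \<in> {1..r} \<Longrightarrow> bij_betw (T i) Z Z"
    and T': "\<And>i y. y \<in> Y \<Longrightarrow> T' i y = f (T i (inv_into Z f y))"
    and L': "\<And>y. y \<in> Y \<Longrightarrow> L' y = L (inv_into Z f y)"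
    and z: "z \<in> Z"
  shows "rgraph_iso (ball_graph r Y T' L' (f z)) (ball_graph r Z T L z)"
    "rgraph_iso (ball_graph r Z T L z) (ball_graph r Y T' L' (f z))"
proof -
  have tw: "act_word Y T' u (f z) = f (act_word Z T u z)" if "u \<in> wbig r" for u
    using transport_word[OF f T T' z] that by (auto simp: wbig_def)
  have inZ: "act_word Z T u z \<in> Z" if "u \<in> wbig r" for u
    using act_word_in[OF T z] that by (auto simp: wbig_def)
  have fi: "inj_on f Z" using f by (simp add: bij_betw_def)
  have pat: "(act_word Y T' u (f z) = act_word Y T' u' (f z)) = (act_word Z T u z = act_word Z T u' z)"
    if "u \<in> wbig r" "u' \<in> wbig r" for u u'
    using tw[OF that(1)] tw[OF that(2)] inZ[OF that(1)] inZ[OF that(2)] fi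
    by (metis inj_on_def)
  have lab: "L' (act_word Y T' w (f z)) k = L (act_word Z T w z) k" if "w \<in> reduced_words r" for w k
  proof -
    have w: "w \<in> wbig r" using that reduced_sub_wbig by blast
    have "f (act_word Z T w z) \<in> Y" using inZ[OF w] f by (meson bij_betwE)
    then show ?thesis using tw[OF w] L' inZ[OF w] fi by (simp add: inv_into_f_f)
  qed
  show "rgraph_iso (ball_graph r Y T' L' (f z)) (ball_graph r Z T L z)"
    by (rule gen_iso) (use pat lab in auto)
  show "rgraph_iso (ball_graph r Z T L z) (ball_graph r Y T' L' (f z))"
    by (rule gen_iso) (use pat lab in auto)
qed

lemma transport_p_fin:
  assumes f: "bij_betw f Z Y" and T: "\<And>i. i \<in> {1..r} \<Longrightarrow> bij_betw (T i) Z Z"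
    and T': "\<And>i y. y \<in> Y \<Longrightarrow> T' i y = f (T i (inv_into Z f y))"
    and L': "\<And>y. y \<in> Y \<Longrightarrow> L' y = L (inv_into Z f y)"
  shows "p_fin r Y T' L' \<alpha> = p_fin r Z T L \<alpha>"
proof -
  have "{y \<in> Y. rgraph_iso (ball_graph r Y T' L' y) \<alpha>} = f ` {z \<in> Z. rgraph_iso (ball_graph r Z T L z) \<alpha>}"
  proof safe
    fix y assume y: "y \<in> Y" "rgraph_iso (ball_graph r Y T' L' y) \<alpha>"
    obtain z where z: "z \<in> Z" "y = f z" using f y(1) by (metis bij_betw_def imageE)
    have "rgraph_iso (ball_graph r Z T L z) \<alpha>"
      using rgraph_iso_trans[OF transport_iso(2)[where r=r and T=T and T'=T' and L=L and L'=L', OF f T T' L' z(1)]] y(2) z(2) by simp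
    then show "y \<in> f ` {z \<in> Z. rgraph_iso (ball_graph r Z T L z) \<alpha>}" using z by blast
  next
    fix z assume z: "z \<in> Z" "rgraph_iso (ball_graph r Z T L z) \<alpha>"
    show "f z \<in> Y" using f z(1) by (meson bij_betwE)
    show "rgraph_iso (ball_graph r Y T' L' (f z)) \<alpha>"
      using rgraph_iso_trans[OF transport_iso(1)[where r=r and T=T and T'=T' and L=L and L'=L', OF f T T' L' z(1)] z(2)] .
  qed
  moreover have "inj_on f {z \<in> Z. rgraph_iso (ball_graph r Z T L z) \<alpha>}"
    using f by (auto simp: bij_betw_def inj_on_def)
  moreover have "card Y = card Z" using f by (simp add: bij_betw_same_card)
  ultimately show ?thesis by (simp add: p_fin_def card_image)
qed

abbreviation CM :: "nat \<Rightarrow> bool measure" where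
  "CM \<equiv> (\<lambda>_. measure_pmf (pmf_of_set (UNIV :: bool set)))"

interpretation CMP: product_prob_space CM "UNIV :: nat set"
  by unfold_locales (simp add: prob_space_measure_pmf)

lemma cantor_eq: "cantor_measure = PiM UNIV CM"
  by (simp add: cantor_measure_def)

lemma space_cantor[simp]: "space cantor_measure = UNIV"
  by (simp add: cantor_measure_def space_PiM)

lemma prob_cantor: "prob_space cantor_measure"
  unfolding cantor_eq by (rule CMP.P.prob_space_axioms)

lemma emeasure_pt: "emeasure (CM j) {b} = ennreal (1/2)"
  by (simp add: emeasure_pmf_single)

lemma cyl_sets_fin:
  assumes J: "finite J"
  shows "{f \<in> PiE J (\<lambda>_. UNIV). P f} \<in> sets (PiM J CM)"
    "emeasure (PiM J CM) {f \<in> PiE J (\<lambda>_. UNIV). P f} = card {f \<in> PiE J (\<lambda>_. UNIV). P f} * (1/2) ^ card J"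
proof -
  let ?X = "{f \<in> PiE J (\<lambda>_. UNIV::bool set). P f}"
  have fin: "finite ?X" by (rule finite_subset[of _ "PiE J (\<lambda>_. UNIV)"]) (auto intro: finite_PiE simp: J)
  have single: "{f} = PiE J (\<lambda>j. {f j})" if "f \<in> PiE J (\<lambda>_. UNIV)" for f
    using that by (auto simp: PiE_iff extensional_def) (metis ext)
  have ss: "{f} \<in> sets (PiM J CM)" if "f \<in> ?X" for f
    using that single[of f] J by (auto intro!: sets_PiM_I_finite)
  have "?X = (\<Union>f\<in>?X. {f})" by blast
  also have "\<dots> \<in> sets (PiM J CM)"
    using fin ss by (intro sets.finite_UN) auto
  finally show "?X \<in> sets (PiM J CM)" .
  have "emeasure (PiM J CM) ?X = (\<Sum>f\<in>?X. emeasure (PiM J CM) {f})"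
    using fin ss by (rule emeasure_eq_sum_singleton)
  also have "\<dots> = (\<Sum>f\<in>?X. ennreal ((1/2) ^ card J))"
  proof (rule sum.cong[OF refl])
    fix f assume f: "f \<in> ?X"
    have "emeasure (PiM J CM) {f} = (\<Prod>j\<in>J. emeasure (CM j) {f j})"
      using single[of f] f J by (simp add: CMP.emeasure_PiM)
    also have "\<dots> = (\<Prod>j\<in>J. ennreal (1/2))" by (simp add: emeasure_pt)
    also have "\<dots> = ennreal ((1/2) ^ card J)" by (simp only: prod_constant) (rule ennreal_power, simp)
    finally show "emeasure (PiM J CM) {f} = ennreal ((1/2) ^ card J)" .
  qed
  also have "\<dots> = card ?X * (1/2) ^ card J" by (simp add: ennreal_of_nat_eq_real_of_nat ennreal_mult')
  finally show "emeasure (PiM J CM) ?X = card ?X * (1/2) ^ card J" .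
qed

lemma cyl_emb: "{x. P (restrict x J)} = prod_emb UNIV CM J {f \<in> PiE J (\<lambda>_. UNIV). P f}"
  by (auto simp: prod_emb_def space_PiM)

lemma cyl_sets:
  assumes "finite J"
  shows "{x. P (restrict x J)} \<in> sets cantor_measure"
  unfolding cyl_emb cantor_eq
  by (rule measurable_prod_emb) (use cyl_sets_fin(1)[OF assms] in auto)

lemma cyl_measure:
  assumes J: "finite J"
  shows "measure cantor_measure {x. P (restrict x J)} = card {f \<in> PiE J (\<lambda>_. UNIV). P f} / 2 ^ card J"
proof -
  have "emeasure cantor_measure {x. P (restrict x J)} = card {f \<in> PiE J (\<lambda>_. UNIV). P f} * (1/2) ^ card J"
    unfolding cyl_emb cantor_eq
    using CMP.emeasure_PiM_emb'[of J "{f \<in> PiE J (\<lambda>_. UNIV). P f}"] cyl_sets_fin[OF J] J by simp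
  then show ?thesis
    by (simp add: measure_def power_divide)
qed

lemma eq2_sets: "{x::nat\<Rightarrow>bool. x a = x b} \<in> sets cantor_measure"
proof -
  have e: "{x::nat\<Rightarrow>bool. x a = x b} = {x. (\<lambda>f. f a = f b) (restrict x {a, b})}" by auto
  show ?thesis unfolding e by (rule cyl_sets) simp
qed

lemma eqall_sets: "{x::nat\<Rightarrow>bool. \<forall>k::nat. x (p k) = x (q k)} \<in> sets cantor_measure"
proof -
  have "{x::nat\<Rightarrow>bool. \<forall>k. x (p k) = x (q k)} = (\<Inter>k\<in>UNIV. {x. x (p k) = x (q k)})" by auto
  also have "\<dots> \<in> sets cantor_measure"
    by (rule sets.countable_INT'') (use eq2_sets sets.top[of cantor_measure] in auto)
  finally show ?thesis .
qed

lemma exists_K: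
  fixes \<tau> :: "nat \<Rightarrow> nat"
  assumes inj: "inj \<tau>" and nf: "\<And>i. \<tau> i \<noteq> i"
  shows "\<exists>K. finite K \<and> card K = m \<and> K \<inter> \<tau> ` K = {}"
proof (induction m)
  case 0 then show ?case by (intro exI[of _ "{}"]) auto
next
  case (Suc m)
  then obtain K where K: "finite K" "card K = m" "K \<inter> \<tau> ` K = {}" by blast
  have fin: "finite (K \<union> \<tau> ` K \<union> \<tau> -` K)"
    using K(1) inj by (simp add: finite_vimageI)
  obtain k where k: "k \<notin> K \<union> \<tau> ` K \<union> \<tau> -` K"
    using ex_new_if_finite[OF infinite_UNIV_nat fin] by blast
  show ?case
  proof (intro exI[of _ "insert k K"] conjI)
    show "finite (insert k K)" using K by simp
    show "card (insert k K) = Suc m" using K k by simp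
    show "insert k K \<inter> \<tau> ` insert k K = {}"
    proof (rule equals0I)
      fix y assume "y \<in> insert k K \<inter> \<tau> ` insert k K"
      then have y1: "y = k \<or> y \<in> K" and y2: "y = \<tau> k \<or> y \<in> \<tau> ` K" by auto
      have k1: "k \<notin> K" "k \<notin> \<tau> ` K" "\<tau> k \<notin> K" using k by auto
      show False
        using y1 y2 k1 nf[of k] K(3) by auto
    qed
  qed
qed


lemma null_shift:
  fixes \<tau> :: "nat \<Rightarrow> nat"
  assumes inj: "inj \<tau>" and nf: "\<And>i. \<tau> i \<noteq> i"
  shows "measure cantor_measure {x. \<forall>i. x i = x (\<tau> i)} = 0"
proof -
  let ?D = "{x::nat\<Rightarrow>bool. \<forall>i. x i = x (\<tau> i)}"
  have D: "?D \<in> sets cantor_measure" using eqall_sets[of "\<lambda>i. i" \<tau>] by simp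
  have bound: "measure cantor_measure ?D \<le> 1 / 2 ^ m" for m
  proof -
    obtain K where K: "finite K" "card K = m" "K \<inter> \<tau> ` K = {}" using exists_K[OF inj nf] by blast
    define J where "J = K \<union> \<tau> ` K"
    have J: "finite J" using K by (simp add: J_def)
    have cJ: "card J = 2 * m"
      proof -
      have "card J = card K + card (\<tau> ` K)" unfolding J_def
        using K(1) K(3) by (intro card_Un_disjoint) auto
      moreover have "card (\<tau> ` K) = card K" by (rule card_image[OF inj_on_subset[OF inj subset_UNIV]])
      ultimately show ?thesis using K(2) by simp
    qed
    let ?P = "\<lambda>f. \<forall>i\<in>K. f i = f (\<tau> i)"
    have sub: "?D \<subseteq> {x. ?P (restrict x J)}" by (auto simp: J_def)
    have S: "card {f \<in> PiE J (\<lambda>_. UNIV::bool set). ?P f} \<le> 2 ^ m"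
    proof -
      have i1: "inj_on (\<lambda>f. restrict f K) {f \<in> PiE J (\<lambda>_. UNIV::bool set). ?P f}"
      proof (rule inj_onI)
        fix f g assume f: "f \<in> {f \<in> PiE J (\<lambda>_. UNIV::bool set). ?P f}" and g: "g \<in> {f \<in> PiE J (\<lambda>_. UNIV::bool set). ?P f}"
          and eq: "restrict f K = restrict g K"
        show "f = g"
        proof
          fix y
          show "f y = g y"
          proof (cases "y \<in> J")
            case False then show ?thesis using f g by (auto simp: PiE_def extensional_def)
          next
            case True
            then consider "y \<in> K" | i where "i \<in> K" "y = \<tau> i" by (auto simp: J_def)
            then show ?thesis
            proof cases
              case 1 then show ?thesis using eq by (metis restrict_apply')
            next
              case 2
              have "f i = g i" using eq 2(1) by (metis restrict_apply')
              then show ?thesis using f g 2 by auto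
            qed
          qed
        qed
      qed
      have i2: "(\<lambda>f. restrict f K) ` {f \<in> PiE J (\<lambda>_. UNIV::bool set). ?P f} \<subseteq> PiE K (\<lambda>_. UNIV)"
        by auto
      have i3: "card (PiE K (\<lambda>_. UNIV::bool set)) = 2 ^ m"
        using K by (simp add: card_PiE)
      have i4: "finite (PiE K (\<lambda>_. UNIV::bool set))" using K(1) by (simp add: finite_PiE)
      show ?thesis using card_inj_on_le[OF i1 i2 i4] i3 by simp
    qed
    have "measure cantor_measure ?D \<le> measure cantor_measure {x. ?P (restrict x J)}"
      by (rule finite_measure.finite_measure_mono[OF prob_space.finite_measure[OF prob_cantor] sub cyl_sets[OF J]])
    also have "\<dots> = card {f \<in> PiE J (\<lambda>_. UNIV::bool set). ?P f} / 2 ^ card J"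
      by (rule cyl_measure[OF J])
    also have "\<dots> \<le> 2 ^ m / 2 ^ (2 * m)"
    proof -
      have "real (card {f \<in> PiE J (\<lambda>_. UNIV::bool set). ?P f}) \<le> real (2 ^ m)"
        using S by (simp only: of_nat_le_iff)
      then show ?thesis unfolding cJ by (intro divide_right_mono) auto
    qed
    also have "\<dots> = 1 / 2 ^ m" by (simp add: mult_2 power_add)
    finally show ?thesis .
  qed
  have "measure cantor_measure ?D \<le> 0"
  proof (rule ccontr)
    assume "\<not> ?thesis"
    then have pos: "measure cantor_measure ?D > 0" by simp
    obtain m where "1 / 2 ^ m < measure cantor_measure ?D"
      using real_arch_pow_inv[OF pos, of "1/2"] by (auto simp: power_one_over)
    then show False using bound[of m] by simp
  qed
  then show ?thesis by (simp add: measure_nonneg antisym)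
qed

definition lt :: "('a, 'b) monoid_scheme \<Rightarrow> (nat \<Rightarrow> 'a) \<Rightarrow> letter \<Rightarrow> 'a" where
  "lt G s a = (if snd a then s (fst a) else inv\<^bsub>G\<^esub> (s (fst a)))"

primrec gw :: "('a, 'b) monoid_scheme \<Rightarrow> (nat \<Rightarrow> 'a) \<Rightarrow> letter list \<Rightarrow> 'a" where
  "gw G s [] = \<one>\<^bsub>G\<^esub>"
| "gw G s (a # w) = gw G s w \<otimes>\<^bsub>G\<^esub> lt G s a"

locale bset = group G for G :: "('a, 'b) monoid_scheme" (structure) +
  fixes e :: "nat \<Rightarrow> 'a" and s :: "nat \<Rightarrow> 'a"
  assumes e_bij: "bij_betw e UNIV (carrier G)"
    and s_in: "\<And>i. i \<ge> 1 \<Longrightarrow> s i \<in> carrier G"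
begin

definition \<iota> :: "'a \<Rightarrow> nat" where "\<iota> = inv_into UNIV e"

lemma e_in[simp]: "e k \<in> carrier G"
  using e_bij by (meson UNIV_I bij_betwE)

lemma e_inj: "inj e"
  using e_bij by (simp add: bij_betw_def)

lemma \<iota>_e[simp]: "\<iota> (e k) = k"
  by (simp add: \<iota>_def e_inj)

lemma e_\<iota>[simp]: "g \<in> carrier G \<Longrightarrow> e (\<iota> g) = g"
  using e_bij unfolding \<iota>_def by (metis bij_betw_def f_inv_into_f)

lemma \<iota>_inj: "g \<in> carrier G \<Longrightarrow> h \<in> carrier G \<Longrightarrow> \<iota> g = \<iota> h \<Longrightarrow> g = h"
  by (metis e_\<iota>)

lemma bsh: "bshift G e g x = (\<lambda>k. x (\<iota> (g \<otimes> e k)))"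
  by (simp add: bshift_def \<iota>_def)

lemma bsh_comp: "g \<in> carrier G \<Longrightarrow> h \<in> carrier G \<Longrightarrow>
    bshift G e g (bshift G e h x) = bshift G e (h \<otimes> g) x"
  by (simp add: bsh m_assoc)

lemma bsh_one[simp]: "bshift G e \<one> x = x"
  by (simp add: bsh)

lemma bsh_bij: "g \<in> carrier G \<Longrightarrow> bij (bshift G e g)"
proof -
  assume g: "g \<in> carrier G"
  have "bshift G e g (bshift G e (inv g) x) = x" for x
    using g by (simp add: bsh_comp)
  moreover have "bshift G e (inv g) (bshift G e g x) = x" for x
    using g by (simp add: bsh_comp)
  ultimately show ?thesis by (metis bijI' )
qed

lemma bsh_inv: "g \<in> carrier G \<Longrightarrow> inv_into UNIV (bshift G e g) = bshift G e (inv g)"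
proof
  fix y assume g: "g \<in> carrier G"
  have "bshift G e g (bshift G e (inv g) y) = y" using g by (simp add: bsh_comp)
  then show "inv_into UNIV (bshift G e g) y = bshift G e (inv g) y"
    using bsh_bij[OF g] by (metis bij_def inv_f_eq)
qed

lemma lt_in: "fst a \<ge> 1 \<Longrightarrow> lt G s a \<in> carrier G"
  by (simp add: lt_def s_in)

lemma gw_in: "\<forall>a\<in>set u. fst a \<ge> 1 \<Longrightarrow> gw G s u \<in> carrier G"
  by (induction u) (auto simp: lt_in)

lemma act_bsh: "\<forall>a\<in>set u. fst a \<ge> 1 \<Longrightarrow>
    act_word UNIV (\<lambda>i. bshift G e (s i)) u x = bshift G e (gw G s u) x"
proof (induction u)
  case Nil then show ?case by simp
next
  case (Cons a u)
  then have a: "fst a \<ge> 1" and u: "\<forall>a\<in>set u. fst a \<ge> 1" by auto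
  have IH: "act_word UNIV (\<lambda>i. bshift G e (s i)) u x = bshift G e (gw G s u) x" using Cons u by simp
  have si: "s (fst a) \<in> carrier G" using s_in a .
  have gu: "gw G s u \<in> carrier G" using gw_in u .
  show ?case
  proof (cases "snd a")
    case True
    then show ?thesis using IH si gu by (simp add: act_letter_def bsh_comp lt_def)
  next
    case False
    then show ?thesis using IH si gu by (simp add: act_letter_def bsh_comp lt_def bsh_inv)
  qed
qed

lemma bsh_eq_null:
  assumes g: "g \<in> carrier G" and h: "h \<in> carrier G" and ne: "g \<noteq> h"
  shows "{x. bshift G e g x = bshift G e h x} \<in> sets cantor_measure"
    "measure cantor_measure {x. bshift G e g x = bshift G e h x} = 0"
proof -
  define \<tau> where "\<tau> i = \<iota> (h \<otimes> inv g \<otimes> e i)" for i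
  have eq: "{x. bshift G e g x = bshift G e h x} = {x::nat\<Rightarrow>bool. \<forall>i. x i = x (\<tau> i)}"
  proof (intro equalityI subsetI CollectI allI; drule CollectD)
    fix x i assume "bshift G e g x = bshift G e h x"
    then have "bshift G e g x (\<iota> (inv g \<otimes> e i)) = bshift G e h x (\<iota> (inv g \<otimes> e i))" by simp
    then show "x i = x (\<tau> i)" using g h by (simp add: bsh \<tau>_def m_assoc[symmetric])
  next
    fix x :: "nat \<Rightarrow> bool" assume a: "\<forall>i. x i = x (\<tau> i)"
    show "bshift G e g x = bshift G e h x"
    proof
      fix k
      have "x (\<iota> (g \<otimes> e k)) = x (\<tau> (\<iota> (g \<otimes> e k)))" using a by blast
      also have "\<tau> (\<iota> (g \<otimes> e k)) = \<iota> (h \<otimes> e k)"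
      proof -
        have "inv g \<otimes> (g \<otimes> e k) = e k" using g by (simp add: m_assoc[symmetric] l_inv)
        then show ?thesis using g h by (simp add: \<tau>_def m_assoc)
      qed
      finally show "bshift G e g x k = bshift G e h x k" by (simp add: bsh)
    qed
  qed
  have inj: "inj \<tau>"
  proof (rule injI)
    fix i j assume "\<tau> i = \<tau> j"
    then have "h \<otimes> inv g \<otimes> e i = h \<otimes> inv g \<otimes> e j"
      using g h by (intro \<iota>_inj) (auto simp: \<tau>_def)
    then have "e i = e j" using g h by (simp add: m_assoc)
    then show "i = j" using e_inj by (simp add: inj_eq)
  qed
  have nf: "\<tau> i \<noteq> i" for i
  proof
    assume "\<tau> i = i"
    then have "e (\<tau> i) = e i" by simp
    then have "h \<otimes> inv g \<otimes> e i = e i" using g h by (simp add: \<tau>_def)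
    then have "h \<otimes> inv g = \<one>" using g h by simp
    then have "h = g" using g h by (metis inv_closed inv_inv inv_equality)
    then show False using ne by simp
  qed
  show "{x. bshift G e g x = bshift G e h x} \<in> sets cantor_measure"
    unfolding eq using eqall_sets[of "\<lambda>i. i" \<tau>] by simp
  show "measure cantor_measure {x. bshift G e g x = bshift G e h x} = 0"
    unfolding eq by (rule null_shift[OF inj nf])
qed

lemma bsh_meas: "g \<in> carrier G \<Longrightarrow> bshift G e g \<in> cantor_measure \<rightarrow>\<^sub>M cantor_measure"
  unfolding bsh cantor_eq
  by (rule measurable_PiM_single'[where f="\<lambda>k x. x (\<iota> (g \<otimes> e k))"])
     (auto simp: space_PiM)

lemma bsh_distr:
  assumes g: "g \<in> carrier G"
  shows "distr cantor_measure cantor_measure (bshift G e g) = cantor_measure"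
proof -
  define \<pi> where "\<pi> k = \<iota> (g \<otimes> e k)" for k
  define \<pi>i where "\<pi>i k = \<iota> (inv g \<otimes> e k)" for k
  have p1: "\<pi>i (\<pi> k) = k" for k
  proof -
    have "inv g \<otimes> (g \<otimes> e k) = e k" using g by (simp add: m_assoc[symmetric] l_inv)
    then show ?thesis using g by (simp add: \<pi>_def \<pi>i_def)
  qed
  have injp: "inj_on \<pi> J" for J by (metis inj_onI p1)
  have b: "bshift G e g x = (\<lambda>k. x (\<pi> k))" for x by (simp add: bsh \<pi>_def)
  show ?thesis
    unfolding cantor_eq
  proof (rule CMP.PiM_eq)
    show "sets (distr (PiM UNIV CM) (PiM UNIV CM) (bshift G e g)) = sets (PiM UNIV CM)" by simp
  next
    fix J :: "nat set" and F assume J: "finite J" "J \<subseteq> UNIV" and F: "\<And>j. j \<in> J \<Longrightarrow> F j \<in> sets (CM j)"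
    have A: "prod_emb UNIV CM J (PiE J F) \<in> sets (PiM UNIV CM)"
      using J F by (intro measurable_prod_emb sets_PiM_I_finite) auto
    have meas: "bshift G e g \<in> measurable (PiM UNIV CM) (PiM UNIV CM)"
      using bsh_meas[OF g] by (simp add: cantor_eq)
    have pre: "bshift G e g -` prod_emb UNIV CM J (PiE J F) \<inter> space (PiM UNIV CM)
        = {x \<in> space (PiM UNIV CM). \<forall>i\<in>\<pi> ` J. x i \<in> F (\<pi>i i)}"
      by (auto simp: prod_emb_def space_PiM b p1 PiE_iff)
    have "emeasure (distr (PiM UNIV CM) (PiM UNIV CM) (bshift G e g)) (prod_emb UNIV CM J (PiE J F))
        = emeasure (PiM UNIV CM) {x \<in> space (PiM UNIV CM). \<forall>i\<in>\<pi> ` J. x i \<in> F (\<pi>i i)}"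
      by (simp add: emeasure_distr[OF meas A] pre)
    also have "\<dots> = (\<Prod>i\<in>\<pi> ` J. emeasure (CM i) (F (\<pi>i i)))"
      using J by (intro CMP.emeasure_PiM_Collect) auto
    also have "\<dots> = (\<Prod>j\<in>J. emeasure (CM j) (F j))"
      by (simp add: prod.reindex[OF injp] p1)
    finally show "emeasure (distr (PiM UNIV CM) (PiM UNIV CM) (bshift G e g)) (prod_emb UNIV CM J (PiE J F))
        = (\<Prod>j\<in>J. emeasure (CM j) (F j))" .
  qed
qed

lemma bsh_mpres: "g \<in> carrier G \<Longrightarrow> mpres (bshift G e g)"
  by (simp add: mpres_def bsh_meas bsh_distr)

lemma mp_action: "mp_borel_action (\<lambda>i. bshift G e (s i))"
  unfolding mp_borel_action_def
  using s_in by (auto simp: bsh_bij bsh_inv bsh_mpres)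

end

context bset
begin

definition patB :: "nat \<Rightarrow> (nat \<Rightarrow> bool) \<Rightarrow> (letter list \<times> letter list) set" where
  "patB r x = {(u, u'). u \<in> wbig r \<and> u' \<in> wbig r \<and> bshift G e (gw G s u) x = bshift G e (gw G s u') x}"

definition GP :: "nat \<Rightarrow> (letter list \<times> letter list) set" where
  "GP r = {(u, u'). u \<in> wbig r \<and> u' \<in> wbig r \<and> gw G s u = gw G s u'}"

definition Cset :: "nat \<Rightarrow> 'a set" where
  "Cset r = (\<lambda>(w, k). gw G s w \<otimes> e k) ` (reduced_words r \<times> {..<r})"

definition Jset :: "nat \<Rightarrow> nat set" where
  "Jset r = \<iota> ` Cset r"

definition ballB :: "nat \<Rightarrow> (nat \<Rightarrow> bool) \<Rightarrow> (nat \<Rightarrow> bool) rgraph" where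
  "ballB r x = ball_graph r UNIV (\<lambda>i. bshift G e (s i)) (\<lambda>x. x) x"

definition Phi :: "nat \<Rightarrow> 'v rgraph \<Rightarrow> (nat \<Rightarrow> bool) \<Rightarrow> bool" where
  "Phi r \<alpha> f = (\<exists>x'. patB r x' = GP r \<and> restrict x' (Jset r) = f \<and> rgraph_iso (ballB r x') \<alpha>)"

lemma wbig_ge1: "u \<in> wbig r \<Longrightarrow> \<forall>a\<in>set u. fst a \<ge> 1"
  by (auto simp: wbig_def)

lemma reduced_ge1: "u \<in> reduced_words r \<Longrightarrow> \<forall>a\<in>set u. fst a \<ge> 1"
  using reduced_sub_wbig wbig_ge1 by blast

lemma finite_Cset: "finite (Cset r)"
  unfolding Cset_def using finite_reduced by simp

lemma finite_Jset: "finite (Jset r)"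
  unfolding Jset_def using finite_Cset by simp

lemma Cset_in: "c \<in> Cset r \<Longrightarrow> c \<in> carrier G"
  unfolding Cset_def using gw_in reduced_ge1 by auto

lemma iso_B:
  assumes "patB r x = patB r x'" "restrict x (Jset r) = restrict x' (Jset r)"
  shows "rgraph_iso (ballB r x) (ballB r x')"
  unfolding ballB_def
proof (rule gen_iso)
  fix u u' assume u: "u \<in> wbig r" "u' \<in> wbig r"
  have "(act_word UNIV (\<lambda>i. bshift G e (s i)) u x = act_word UNIV (\<lambda>i. bshift G e (s i)) u' x)
      \<longleftrightarrow> (u, u') \<in> patB r x"
    using u act_bsh[OF wbig_ge1[OF u(1)]] act_bsh[OF wbig_ge1[OF u(2)]] by (simp add: patB_def)
  moreover have "(act_word UNIV (\<lambda>i. bshift G e (s i)) u x' = act_word UNIV (\<lambda>i. bshift G e (s i)) u' x')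
      \<longleftrightarrow> (u, u') \<in> patB r x'"
    using u act_bsh[OF wbig_ge1[OF u(1)]] act_bsh[OF wbig_ge1[OF u(2)]] by (simp add: patB_def)
  ultimately show "(act_word UNIV (\<lambda>i. bshift G e (s i)) u x = act_word UNIV (\<lambda>i. bshift G e (s i)) u' x)
      = (act_word UNIV (\<lambda>i. bshift G e (s i)) u x' = act_word UNIV (\<lambda>i. bshift G e (s i)) u' x')"
    using assms(1) by simp
next
  fix w k assume w: "w \<in> reduced_words r" and k: "k < r"
  have J: "\<iota> (gw G s w \<otimes> e k) \<in> Jset r"
    unfolding Jset_def Cset_def using w k by auto
  have "x (\<iota> (gw G s w \<otimes> e k)) = x' (\<iota> (gw G s w \<otimes> e k))"
    using assms(2) J by (metis restrict_apply')
  then show "act_word UNIV (\<lambda>i. bshift G e (s i)) w x' k = act_word UNIV (\<lambda>i. bshift G e (s i)) w x k"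
    using act_bsh[OF reduced_ge1[OF w]] by (simp add: bsh)
qed

lemma bsh_eq_sets: "g \<in> carrier G \<Longrightarrow> h \<in> carrier G \<Longrightarrow> {x. bshift G e g x = bshift G e h x} \<in> sets cantor_measure"
  using sets.top[of cantor_measure] by (cases "g = h") (auto simp: bsh_eq_null)

lemma AE_good: "AE x in cantor_measure. patB r x = GP r"
proof -
  let ?X = "{(u, u'). u \<in> wbig r \<and> u' \<in> wbig r \<and> gw G s u \<noteq> gw G s u'}"
  have cX: "countable ?X"
    by (rule countable_finite, rule finite_subset[of _ "wbig r \<times> wbig r"]) (auto simp: finite_wbig)
  have "AE x in cantor_measure. \<forall>p\<in>?X. bshift G e (gw G s (fst p)) x \<noteq> bshift G e (gw G s (snd p)) x"
  proof (subst AE_ball_countable[OF cX], intro ballI)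
    fix p assume p: "p \<in> ?X"
    then obtain u u' where uu: "p = (u, u')" "u \<in> wbig r" "u' \<in> wbig r" "gw G s u \<noteq> gw G s u'" by auto
    have g: "gw G s u \<in> carrier G" "gw G s u' \<in> carrier G" using uu gw_in wbig_ge1 by auto
    let ?N = "{x. bshift G e (gw G s u) x = bshift G e (gw G s u') x}"
    have "?N \<in> null_sets cantor_measure"
    proof (rule null_setsI)
      show "?N \<in> sets cantor_measure" using bsh_eq_null(1)[OF g uu(4)] .
      show "emeasure cantor_measure ?N = 0"
        using bsh_eq_null[OF g uu(4)] finite_measure.emeasure_eq_measure[OF prob_space.finite_measure[OF prob_cantor]] by simp
    qed
    from AE_not_in[OF this]
    show "AE x in cantor_measure. bshift G e (gw G s (fst p)) x \<noteq> bshift G e (gw G s (snd p)) x"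
      using uu by simp
  qed
  then show ?thesis
  proof (rule AE_mp, intro AE_I2 impI)
    fix x assume a: "\<forall>p\<in>?X. bshift G e (gw G s (fst p)) x \<noteq> bshift G e (gw G s (snd p)) x"
    show "patB r x = GP r"
      unfolding patB_def GP_def using a by auto
  qed
qed

lemma patB_sub: "patB r x \<subseteq> wbig r \<times> wbig r"
  by (auto simp: patB_def)

lemma GP_sub: "GP r \<subseteq> wbig r \<times> wbig r"
  by (auto simp: GP_def)

lemma patB_sets: "{x. \<forall>p\<in>wbig r \<times> wbig r. (p \<in> patB r x) = (p \<in> P)} \<in> sets cantor_measure"
proof -
  let ?E = "\<lambda>p. {x. bshift G e (gw G s (fst p)) x = bshift G e (gw G s (snd p)) x}"
  have E: "?E p \<in> sets cantor_measure" if "p \<in> wbig r \<times> wbig r" for p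
    using that by (intro bsh_eq_sets gw_in) (auto simp: wbig_def)
  have eq: "{x. \<forall>p\<in>wbig r \<times> wbig r. (p \<in> patB r x) = (p \<in> P)}
      = (\<Inter>p\<in>wbig r \<times> wbig r. (if p \<in> P then ?E p else UNIV - ?E p))"
  proof -
    have pe: "(p \<in> patB r x) = (x \<in> ?E p)" if "p \<in> wbig r \<times> wbig r" for p x
      using that by (auto simp: patB_def)
    have h: "(x \<in> (if p \<in> P then ?E p else UNIV - ?E p)) = (x \<in> ?E p \<longleftrightarrow> p \<in> P)" for x p
      by auto
    show ?thesis
      unfolding set_eq_iff INT_iff h mem_Collect_eq using pe by blast
  qed
  show ?thesis unfolding eq
  proof (rule sets.countable_INT'')
    show "UNIV \<in> sets cantor_measure" using sets.top[of cantor_measure] by simp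
    show "countable (wbig r \<times> wbig r)" using finite_wbig by (simp add: countable_finite)
    fix p assume p: "p \<in> wbig r \<times> wbig r"
    have "UNIV - ?E p \<in> sets cantor_measure"
      using sets.compl_sets[OF E[OF p]] by simp
    then show "(if p \<in> P then ?E p else UNIV - ?E p) \<in> sets cantor_measure"
      using E[OF p] by simp
  qed
qed

lemma ballB_sets: "{x. rgraph_iso (ballB r x) \<alpha>} \<in> sets cantor_measure"
proof -
  let ?J = "Jset r"
  let ?A = "{(P, f). \<exists>x'. patB r x' = P \<and> restrict x' ?J = f \<and> rgraph_iso (ballB r x') \<alpha>}"
  let ?S = "\<lambda>P. {x. \<forall>p\<in>wbig r \<times> wbig r. (p \<in> patB r x) = (p \<in> P)}"
  have finA: "finite ?A"
  proof (rule finite_subset)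
    show "?A \<subseteq> Pow (wbig r \<times> wbig r) \<times> PiE ?J (\<lambda>_. UNIV)"
      using patB_sub by auto
    show "finite (Pow (wbig r \<times> wbig r) \<times> PiE ?J (\<lambda>_. UNIV::bool set))"
      using finite_wbig finite_Jset by (auto intro!: finite_PiE)
  qed
  have eq: "{x. rgraph_iso (ballB r x) \<alpha>} = (\<Union>(P, f)\<in>?A. ?S P \<inter> {x. restrict x ?J = f})"
  proof (intro equalityI subsetI)
    fix x assume "x \<in> {x. rgraph_iso (ballB r x) \<alpha>}"
    then have "(patB r x, restrict x ?J) \<in> ?A" by auto
    then show "x \<in> (\<Union>(P, f)\<in>?A. ?S P \<inter> {x. restrict x ?J = f})" by blast
  next
    fix x assume "x \<in> (\<Union>(P, f)\<in>?A. ?S P \<inter> {x. restrict x ?J = f})"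
    then obtain P f x' where x0: "x \<in> ?S P" "restrict x ?J = f" "patB r x' = P" "restrict x' ?J = f"
      "rgraph_iso (ballB r x') \<alpha>"
      by blast
    then have x': "x \<in> ?S (patB r x')" "restrict x ?J = restrict x' ?J" "rgraph_iso (ballB r x') \<alpha>"
      by auto
    have "patB r x = patB r x'" using x'(1) patB_sub[of r x] patB_sub[of r x'] by blast
    then have "rgraph_iso (ballB r x) (ballB r x')" using x'(2) by (rule iso_B)
    then show "x \<in> {x. rgraph_iso (ballB r x) \<alpha>}" using x'(3) rgraph_iso_trans by blast
  qed
  have "(\<Union>(P, f)\<in>?A. ?S P \<inter> {x. restrict x ?J = f}) \<in> sets cantor_measure"
  proof (rule sets.finite_UN[OF finA])
    fix pf assume "pf \<in> ?A"
    obtain P f where pf: "pf = (P, f)" by (cases pf) auto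
    have "{x. restrict x ?J = f} \<in> sets cantor_measure"
      using cyl_sets[OF finite_Jset, of "\<lambda>g. g = f"] by simp
    then show "(case pf of (P, f) \<Rightarrow> ?S P \<inter> {x. restrict x ?J = f}) \<in> sets cantor_measure"
      using patB_sets[of r P] pf by auto
  qed
  then show ?thesis using eq by simp
qed

lemma p_meas_eq:
  "p_meas r (\<lambda>i. bshift G e (s i)) \<alpha> = card {f \<in> PiE (Jset r) (\<lambda>_. UNIV). Phi r \<alpha> f} / 2 ^ card (Jset r)"
proof -
  let ?J = "Jset r"
  have "p_meas r (\<lambda>i. bshift G e (s i)) \<alpha> = measure cantor_measure {x. rgraph_iso (ballB r x) \<alpha>}"
    by (simp add: p_meas_def ballB_def)
  also have "\<dots> = measure cantor_measure {x. Phi r \<alpha> (restrict x ?J)}"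
  proof (rule measure_eq_AE)
    show "AE x in cantor_measure. (x \<in> {x. rgraph_iso (ballB r x) \<alpha>}) = (x \<in> {x. Phi r \<alpha> (restrict x ?J)})"
      using AE_good[of r]
    proof (rule AE_mp, intro AE_I2 impI)
      fix x assume g: "patB r x = GP r"
      show "(x \<in> {x. rgraph_iso (ballB r x) \<alpha>}) = (x \<in> {x. Phi r \<alpha> (restrict x ?J)})"
      proof
        assume "x \<in> {x. rgraph_iso (ballB r x) \<alpha>}"
        then show "x \<in> {x. Phi r \<alpha> (restrict x ?J)}" using g by (auto simp: Phi_def)
      next
        assume "x \<in> {x. Phi r \<alpha> (restrict x ?J)}"
        then obtain x' where x': "patB r x' = GP r" "restrict x' ?J = restrict x ?J" "rgraph_iso (ballB r x') \<alpha>"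
          by (auto simp: Phi_def)
        have "rgraph_iso (ballB r x) (ballB r x')" using g x' by (intro iso_B) auto
        then show "x \<in> {x. rgraph_iso (ballB r x) \<alpha>}" using x'(3) rgraph_iso_trans by blast
      qed
    qed
    show "{x. rgraph_iso (ballB r x) \<alpha>} \<in> sets cantor_measure" by (rule ballB_sets)
    show "{x. Phi r \<alpha> (restrict x ?J)} \<in> sets cantor_measure" by (rule cyl_sets[OF finite_Jset])
  qed
  also have "\<dots> = card {f \<in> PiE ?J (\<lambda>_. UNIV). Phi r \<alpha> f} / 2 ^ card ?J"
    by (rule cyl_measure[OF finite_Jset])
  finally show ?thesis .
qed

lemma exists_good:
  assumes f: "f \<in> PiE (Jset r) (\<lambda>_. UNIV)"
  shows "\<exists>x'. patB r x' = GP r \<and> restrict x' (Jset r) = f"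
proof (rule ccontr)
  let ?J = "Jset r"
  assume ne: "\<not> ?thesis"
  let ?N = "{x. restrict x ?J = f}"
  have N: "?N \<in> sets cantor_measure" using cyl_sets[OF finite_Jset, of "\<lambda>g. g = f"] by simp
  have "AE x in cantor_measure. restrict x ?J \<noteq> f"
    using AE_good[of r] by (rule AE_mp) (use ne in auto)
  then have "emeasure cantor_measure ?N = 0"
    using AE_iff_measurable[OF N, of "\<lambda>x. restrict x ?J \<noteq> f"] by simp
  then have m0: "measure cantor_measure ?N = 0" by (simp add: measure_def)
  have "{g \<in> PiE ?J (\<lambda>_. UNIV). g = f} = {f}" using f by auto
  then have "measure cantor_measure ?N = 1 / 2 ^ card ?J"
    using cyl_measure[OF finite_Jset, of "\<lambda>g. g = f" r] by simp
  then show False using m0 by simp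
qed

end

lemma count_pull:
  assumes N: "finite N" and p: "inj_on p J" "p ` J \<subseteq> N"
  shows "card {\<omega> \<in> PiE N (\<lambda>_. UNIV::bool set). Q (restrict (\<lambda>j. \<omega> (p j)) J)}
       = card {f \<in> PiE J (\<lambda>_. UNIV::bool set). Q f} * 2 ^ (card N - card J)"
proof -
  have J: "finite J" using N p finite_image_iff finite_subset by metis
  define Fib where "Fib f = {\<omega> \<in> PiE N (\<lambda>_. UNIV::bool set). restrict (\<lambda>j. \<omega> (p j)) J = f}" for f
  let ?I = "{f \<in> PiE J (\<lambda>_. UNIV::bool set). Q f}"
  have eq: "{\<omega> \<in> PiE N (\<lambda>_. UNIV::bool set). Q (restrict (\<lambda>j. \<omega> (p j)) J)} = (\<Union>f\<in>?I. Fib f)"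
    by (auto simp: Fib_def)
  have finI: "finite ?I" by (rule finite_subset[of _ "PiE J (\<lambda>_. UNIV)"]) (auto intro: finite_PiE J)
  have finF: "finite (Fib f)" for f
    by (rule finite_subset[of _ "PiE N (\<lambda>_. UNIV)"]) (auto intro: finite_PiE N simp: Fib_def)
  have disj: "\<forall>f\<in>?I. \<forall>g\<in>?I. f \<noteq> g \<longrightarrow> Fib f \<inter> Fib g = {}" by (auto simp: Fib_def)
  have cardF: "card (Fib f) = 2 ^ (card N - card J)" if f: "f \<in> PiE J (\<lambda>_. UNIV)" for f
  proof -
    have FE: "Fib f = PiE N (\<lambda>i. if i \<in> p ` J then {f (the_inv_into J p i)} else UNIV)"
    proof (intro equalityI subsetI)
      fix \<omega> assume w: "\<omega> \<in> Fib f"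
      then have w1: "\<omega> \<in> PiE N (\<lambda>_. UNIV)" and w2: "restrict (\<lambda>j. \<omega> (p j)) J = f" by (auto simp: Fib_def)
      show "\<omega> \<in> PiE N (\<lambda>i. if i \<in> p ` J then {f (the_inv_into J p i)} else UNIV)"
      proof (rule PiE_I)
        fix i assume i: "i \<in> N"
        show "\<omega> i \<in> (if i \<in> p ` J then {f (the_inv_into J p i)} else UNIV)"
        proof (cases "i \<in> p ` J")
          case True
          then obtain j where j: "j \<in> J" "i = p j" by blast
          have "f j = \<omega> (p j)" using w2 j(1) by (metis restrict_apply')
          then show ?thesis using True j p(1) by (simp add: the_inv_into_f_f)
        qed simp
      next
        fix i assume "i \<notin> N" then show "\<omega> i = undefined" using w1 by (auto simp: PiE_def extensional_def)
      qed
    next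
      fix \<omega> assume w: "\<omega> \<in> PiE N (\<lambda>i. if i \<in> p ` J then {f (the_inv_into J p i)} else UNIV)"
      have w1: "\<omega> \<in> PiE N (\<lambda>_. UNIV)" using w by (auto simp: PiE_def Pi_def)
      have "restrict (\<lambda>j. \<omega> (p j)) J = f"
      proof
        fix j show "restrict (\<lambda>j. \<omega> (p j)) J j = f j"
        proof (cases "j \<in> J")
          case True
          then have "p j \<in> N" "p j \<in> p ` J" using p(2) by auto
          then have "\<omega> (p j) = f (the_inv_into J p (p j))" using w by (auto simp: PiE_def Pi_def)
          then show ?thesis using True p(1) by (simp add: the_inv_into_f_f)
        next
          case False then show ?thesis using f by (auto simp: PiE_def extensional_def)
        qed
      qed
      then show "\<omega> \<in> Fib f" using w1 by (simp add: Fib_def)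
    qed
    have "card (Fib f) = (\<Prod>i\<in>N. card (if i \<in> p ` J then {f (the_inv_into J p i)} else (UNIV::bool set)))"
      unfolding FE using N by (rule card_PiE)
    also have "\<dots> = (\<Prod>i\<in>N. if i \<in> p ` J then 1 else 2)"
      by (rule prod.cong) auto
    also have "\<dots> = (\<Prod>i\<in>N \<inter> {i. i \<in> p ` J}. 1) * (\<Prod>i\<in>N \<inter> - {i. i \<in> p ` J}. 2)"
      using N by (rule prod.If_cases)
    also have "\<dots> = 2 ^ card (N - p ` J)"
    proof -
      have ND: "N \<inter> - {i. i \<in> p ` J} = N - p ` J" by auto
      show ?thesis unfolding ND by simp
    qed
    also have "card (N - p ` J) = card N - card J"
      using card_Diff_subset[OF finite_imageI[OF J] p(2)] card_image[OF p(1)] by simp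
    finally show ?thesis .
  qed
  have "card (\<Union>f\<in>?I. Fib f) = (\<Sum>f\<in>?I. card (Fib f))"
    using finI finF disj by (intro card_UN_disjoint) auto
  also have "\<dots> = (\<Sum>f\<in>?I. 2 ^ (card N - card J))" using cardF by (intro sum.cong) auto
  also have "\<dots> = card ?I * 2 ^ (card N - card J)" by simp
  finally show ?thesis using eq by simp
qed


context bset
begin

definition Dset :: "nat \<Rightarrow> 'a set" where
  "Dset r = (\<lambda>u. inv (gw G s u)) ` wbig r \<union> (\<lambda>c. inv c) ` Cset r"
definition Bset :: "nat \<Rightarrow> 'a set" where
  "Bset r = Dset r \<union> (\<lambda>d. inv d) ` Dset r \<union> s ` {1..r} \<union> (\<lambda>i. inv (s i)) ` {1..r}
     \<union> (\<lambda>k. inv (e k)) ` {..<r}"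
definition Kset :: "nat \<Rightarrow> 'a set" where
  "Kset r = Bset r \<union> (\<lambda>(a, b). a \<otimes> b) ` (Bset r \<times> Bset r)"

lemma Dset_in: "d \<in> Dset r \<Longrightarrow> d \<in> carrier G"
  unfolding Dset_def using gw_in wbig_ge1 Cset_in by auto

lemma Bset_in: "b \<in> Bset r \<Longrightarrow> b \<in> carrier G"
  unfolding Bset_def using Dset_in s_in by auto

lemma Kset_in: "b \<in> Kset r \<Longrightarrow> b \<in> carrier G"
  unfolding Kset_def using Bset_in by auto

lemma finite_Dset: "finite (Dset r)"
  unfolding Dset_def using finite_wbig finite_Cset by simp

lemma finite_Bset: "finite (Bset r)"
  unfolding Bset_def using finite_Dset by simp

lemma finite_Kset: "finite (Kset r)"
  unfolding Kset_def using finite_Bset by simp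

lemma B_sub_K: "Bset r \<subseteq> Kset r" by (auto simp: Kset_def)

lemma BB_K: "a \<in> Bset r \<Longrightarrow> b \<in> Bset r \<Longrightarrow> a \<otimes> b \<in> Kset r"
  by (auto simp: Kset_def)

lemma D_B: "d \<in> Dset r \<Longrightarrow> d \<in> Bset r" by (simp add: Bset_def)
lemma invD_B: "d \<in> Dset r \<Longrightarrow> inv d \<in> Bset r" by (simp add: Bset_def)
lemma s_B: "i \<in> {1..r} \<Longrightarrow> s i \<in> Bset r" by (simp add: Bset_def)
lemma invs_B: "i \<in> {1..r} \<Longrightarrow> inv (s i) \<in> Bset r" by (simp add: Bset_def)
lemma inve_B: "k < r \<Longrightarrow> inv (e k) \<in> Bset r" by (simp add: Bset_def)
lemma B_K: "b \<in> Bset r \<Longrightarrow> b \<in> Kset r" by (simp add: Kset_def)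

end

locale fin_setup = bset G e s for G :: "('a, 'b) monoid_scheme" (structure) and e s +
  fixes n :: nat and \<phi> :: "'a \<Rightarrow> nat \<Rightarrow> nat"
  assumes phi_perm: "\<And>g. g \<in> carrier G \<Longrightarrow> \<phi> g permutes {..<n}"
    and phi_one: "\<phi> \<one> = id"
begin

definition Om :: "(nat \<Rightarrow> bool) set" where "Om = PiE {..<n} (\<lambda>_. UNIV)"
definition Zs :: "((nat \<Rightarrow> bool) \<times> nat) set" where "Zs = Om \<times> {..<n}"
definition TZ :: "nat \<Rightarrow> (nat \<Rightarrow> bool) \<times> nat \<Rightarrow> (nat \<Rightarrow> bool) \<times> nat" where
  "TZ i z = (fst z, \<phi> (inv (s i)) (snd z))"
definition LZ :: "(nat \<Rightarrow> bool) \<times> nat \<Rightarrow> nat \<Rightarrow> bool" where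
  "LZ z k = fst z (\<phi> (inv (e k)) (snd z))"

definition good :: "nat \<Rightarrow> nat \<Rightarrow> bool" where
  "good r v \<longleftrightarrow> v < n \<and> (\<forall>a\<in>Kset r. \<forall>b\<in>Kset r. \<phi> a (\<phi> b v) = \<phi> (a \<otimes> b) v)
     \<and> (\<forall>a\<in>Kset r. a \<noteq> \<one> \<longrightarrow> \<phi> a v \<noteq> v)"

lemma TZ_pair[simp]: "TZ i (w, x) = (w, \<phi> (inv (s i)) x)" by (simp add: TZ_def)

lemma phi_lt: "g \<in> carrier G \<Longrightarrow> v < n \<Longrightarrow> \<phi> g v < n"
  using permutes_in_image[OF phi_perm] by auto

lemma sep:
  assumes g: "good r v" and d: "d \<in> Dset r" "d' \<in> Dset r" and eq: "\<phi> d v = \<phi> d' v"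
  shows "d = d'"
proof -
  have dc: "d \<in> carrier G" "d' \<in> carrier G" using d Dset_in by auto
  have i: "inv d' \<in> Kset r" "d \<in> Kset r" "d' \<in> Kset r" "inv d' \<otimes> d \<in> Kset r"
    using d by (auto intro: B_K BB_K D_B invD_B)
  have "\<phi> (inv d' \<otimes> d) v = \<phi> (inv d') (\<phi> d v)" using g i by (simp add: good_def)
  also have "\<dots> = \<phi> (inv d') (\<phi> d' v)" using eq by simp
  also have "\<dots> = \<phi> (inv d' \<otimes> d') v" using g i by (simp add: good_def)
  also have "\<dots> = v" using dc by (simp add: phi_one)
  finally have "inv d' \<otimes> d = \<one>" using g i by (auto simp: good_def)
  then show ?thesis using dc by (metis inv_closed inv_inv inv_equality)
qed

lemma TZ_bij: "i \<ge> 1 \<Longrightarrow> bij_betw (TZ i) Zs Zs"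
proof -
  assume i: "i \<ge> 1"
  have p: "\<phi> (inv (s i)) permutes {..<n}" using phi_perm s_in[OF i] by simp
  have b: "bij_betw (\<phi> (inv (s i))) {..<n} {..<n}" using permutes_imp_bij[OF p] .
  have "bij_betw (map_prod id (\<phi> (inv (s i)))) (Om \<times> {..<n}) (Om \<times> {..<n})"
    using bij_betw_id b by (rule bij_betw_map_prod)
  moreover have "map_prod id (\<phi> (inv (s i))) = TZ i"
    by (auto simp: TZ_def map_prod_def)
  ultimately show ?thesis unfolding Zs_def by simp
qed

lemma word_Z:
  assumes g: "good r v" and w: "w \<in> Om" and u: "u \<in> wbig r"
  shows "act_word Zs TZ u (w, v) = (w, \<phi> (inv (gw G s u)) v)"
  using u
proof (induction u)
  case Nil then show ?case by (simp add: phi_one)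
next
  case (Cons a u)
  have u: "u \<in> wbig r" and a: "fst a \<in> {1..r}" using Cons.prems by (auto simp: wbig_def)
  have IH: "act_word Zs TZ u (w, v) = (w, \<phi> (inv (gw G s u)) v)" using Cons.IH u by simp
  have gu: "gw G s u \<in> carrier G" using gw_in wbig_ge1 u by blast
  have si: "s (fst a) \<in> carrier G" using s_in a by simp
  have cD: "inv (gw G s u) \<in> Dset r" using u by (auto simp: Dset_def)
  have cK: "inv (gw G s u) \<in> Kset r" using cD by (intro B_K D_B)
  have siB: "inv (s (fst a)) \<in> Bset r" "s (fst a) \<in> Bset r" using a by (auto intro: invs_B s_B)
  have vn: "v < n" using g by (simp add: good_def)
  show ?case
  proof (cases "snd a")
    case True
    have "\<phi> (inv (s (fst a))) (\<phi> (inv (gw G s u)) v) = \<phi> (inv (s (fst a)) \<otimes> inv (gw G s u)) v"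
      using g B_K[OF siB(1)] cK by (auto simp: good_def)
    moreover have "inv (gw G s u \<otimes> s (fst a)) = inv (s (fst a)) \<otimes> inv (gw G s u)"
      using gu si by (simp add: inv_mult_group)
    ultimately show ?thesis using True IH by (simp add: act_letter_def lt_def)
  next
    case False
    let ?y = "(w, \<phi> (s (fst a) \<otimes> inv (gw G s u)) v)"
    have yK: "s (fst a) \<otimes> inv (gw G s u) \<in> Kset r" using BB_K[OF siB(2) D_B[OF cD]] .
    have "\<phi> (inv (s (fst a))) (\<phi> (s (fst a) \<otimes> inv (gw G s u)) v)
        = \<phi> (inv (s (fst a)) \<otimes> (s (fst a) \<otimes> inv (gw G s u))) v"
      using g B_K[OF siB(1)] yK by (auto simp: good_def)
    also have "inv (s (fst a)) \<otimes> (s (fst a) \<otimes> inv (gw G s u)) = inv (gw G s u)"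
      using si gu by (simp add: m_assoc[symmetric] l_inv)
    finally have Ty: "TZ (fst a) ?y = (w, \<phi> (inv (gw G s u)) v)" by simp
    have yZ: "?y \<in> Zs" using w vn si gu by (simp add: Zs_def phi_lt)
    have inj: "inj_on (TZ (fst a)) Zs" using TZ_bij[of "fst a"] a by (simp add: bij_betw_def)
    have "inv_into Zs (TZ (fst a)) (w, \<phi> (inv (gw G s u)) v) = ?y"
      using inv_into_f_f[OF inj yZ] Ty by simp
    moreover have "inv (gw G s u \<otimes> inv (s (fst a))) = s (fst a) \<otimes> inv (gw G s u)"
      using gu si by (simp add: inv_mult_group)
    ultimately show ?thesis using False IH by (simp add: act_letter_def lt_def)
  qed
qed

end

context fin_setup
begin

definition fw :: "nat \<Rightarrow> nat \<Rightarrow> (nat \<Rightarrow> bool) \<Rightarrow> nat \<Rightarrow> bool" where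
  "fw r v w = restrict (\<lambda>j. w (\<phi> (inv (e j)) v)) (Jset r)"

definition ballZ :: "nat \<Rightarrow> (nat \<Rightarrow> bool) \<times> nat \<Rightarrow> ((nat \<Rightarrow> bool) \<times> nat) rgraph" where
  "ballZ r z = ball_graph r Zs TZ LZ z"

lemma J_D: "j \<in> Jset r \<Longrightarrow> inv (e j) \<in> Dset r"
  unfolding Jset_def Dset_def using Cset_in by auto

lemma iso_Z:
  assumes g: "good r v" and w: "w \<in> Om" and x': "patB r x' = GP r" "restrict x' (Jset r) = fw r v w"
  shows "rgraph_iso (ballZ r (w, v)) (ballB r x')" "rgraph_iso (ballB r x') (ballZ r (w, v))"
proof -
  let ?Tb = "\<lambda>i. bshift G e (s i)"
  have pat: "(act_word Zs TZ u (w, v) = act_word Zs TZ u' (w, v)) = (act_word UNIV ?Tb u x' = act_word UNIV ?Tb u' x')"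
    if u: "u \<in> wbig r" "u' \<in> wbig r" for u u'
  proof -
    have gu: "gw G s u \<in> carrier G" "gw G s u' \<in> carrier G" using u gw_in wbig_ge1 by auto
    have D: "inv (gw G s u) \<in> Dset r" "inv (gw G s u') \<in> Dset r" using u by (auto simp: Dset_def)
    have "(act_word Zs TZ u (w, v) = act_word Zs TZ u' (w, v)) = (\<phi> (inv (gw G s u)) v = \<phi> (inv (gw G s u')) v)"
      using word_Z[OF g w u(1)] word_Z[OF g w u(2)] by simp
    also have "\<dots> = (inv (gw G s u) = inv (gw G s u'))" using sep[OF g D] by auto
    also have "\<dots> = (gw G s u = gw G s u')" using gu inv_inv by metis
    also have "\<dots> = ((u, u') \<in> patB r x')" using x'(1) u by (simp add: GP_def)
    also have "\<dots> = (act_word UNIV ?Tb u x' = act_word UNIV ?Tb u' x')"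
      using u act_bsh[OF wbig_ge1[OF u(1)]] act_bsh[OF wbig_ge1[OF u(2)]] by (simp add: patB_def)
    finally show ?thesis .
  qed
  have lab: "act_word UNIV ?Tb w' x' k = LZ (act_word Zs TZ w' (w, v)) k"
    if w': "w' \<in> reduced_words r" and k: "k < r" for w' k
  proof -
    have w'b: "w' \<in> wbig r" using w' reduced_sub_wbig by blast
    have gw': "gw G s w' \<in> carrier G" using gw_in reduced_ge1 w' by blast
    define c where "c = gw G s w' \<otimes> e k"
    have cC: "c \<in> Cset r" unfolding c_def Cset_def using w' k by auto
    have cc: "c \<in> carrier G" using cC Cset_in by blast
    have jJ: "\<iota> c \<in> Jset r" using cC by (simp add: Jset_def)
    have "act_word UNIV ?Tb w' x' k = x' (\<iota> c)"
      using act_bsh[OF reduced_ge1[OF w']] by (simp add: bsh c_def)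
    also have "\<dots> = w (\<phi> (inv c) v)"
    proof -
      have "x' (\<iota> c) = restrict x' (Jset r) (\<iota> c)" using jJ by simp
      also have "\<dots> = w (\<phi> (inv (e (\<iota> c))) v)" using x'(2) jJ by (simp add: fw_def)
      finally show ?thesis using cc by simp
    qed
    also have "inv c = inv (e k) \<otimes> inv (gw G s w')" using gw' by (simp add: c_def inv_mult_group)
    also have "\<phi> (inv (e k) \<otimes> inv (gw G s w')) v = \<phi> (inv (e k)) (\<phi> (inv (gw G s w')) v)"
    proof -
      have "inv (e k) \<in> Kset r" using k by (intro B_K inve_B)
      moreover have "inv (gw G s w') \<in> Kset r" using w'b by (intro B_K D_B) (auto simp: Dset_def)
      ultimately show ?thesis using g by (simp add: good_def)
    qed
    also have "w \<dots> = LZ (act_word Zs TZ w' (w, v)) k"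
      using word_Z[OF g w w'b] by (simp add: LZ_def)
    finally show ?thesis .
  qed
  show "rgraph_iso (ballZ r (w, v)) (ballB r x')"
    unfolding ballZ_def ballB_def by (rule gen_iso) (use pat lab in auto)
  show "rgraph_iso (ballB r x') (ballZ r (w, v))"
    unfolding ballZ_def ballB_def by (rule gen_iso) (use pat lab in auto)
qed

lemma p_inj:
  assumes g: "good r v"
  shows "inj_on (\<lambda>j. \<phi> (inv (e j)) v) (Jset r)" "(\<lambda>j. \<phi> (inv (e j)) v) ` Jset r \<subseteq> {..<n}"
proof -
  show "inj_on (\<lambda>j. \<phi> (inv (e j)) v) (Jset r)"
  proof (rule inj_onI)
    fix i j assume ij: "i \<in> Jset r" "j \<in> Jset r" "\<phi> (inv (e i)) v = \<phi> (inv (e j)) v"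
    then have "inv (e i) = inv (e j)" using sep[OF g J_D J_D] by blast
    then have "e i = e j" by (metis e_in inv_inv)
    then show "i = j" using e_inj by (simp add: inj_eq)
  qed
  show "(\<lambda>j. \<phi> (inv (e j)) v) ` Jset r \<subseteq> {..<n}"
    using g by (auto simp: good_def intro!: phi_lt)
qed

lemma cardJ_le: "good r v \<Longrightarrow> card (Jset r) \<le> n"
  using card_inj_on_le[OF p_inj] by fastforce

lemma count_v:
  assumes g: "good r v"
  shows "card {w \<in> Om. rgraph_iso (ballZ r (w, v)) \<alpha>}
       = card {f \<in> PiE (Jset r) (\<lambda>_. UNIV). Phi r \<alpha> f} * 2 ^ (n - card (Jset r))"
proof -
  have "{w \<in> Om. rgraph_iso (ballZ r (w, v)) \<alpha>} = {w \<in> Om. Phi r \<alpha> (fw r v w)}"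
  proof (intro Collect_cong conj_cong refl iffI)
    fix w assume w: "w \<in> Om"
    have fP: "fw r v w \<in> PiE (Jset r) (\<lambda>_. UNIV)" by (simp add: fw_def)
    obtain x' where x': "patB r x' = GP r" "restrict x' (Jset r) = fw r v w" using exists_good[OF fP] by blast
    {
      assume "rgraph_iso (ballZ r (w, v)) \<alpha>"
      then have "rgraph_iso (ballB r x') \<alpha>" using iso_Z(2)[OF g w x'] rgraph_iso_trans by blast
      then show "Phi r \<alpha> (fw r v w)" using x' by (auto simp: Phi_def)
    next
      assume "Phi r \<alpha> (fw r v w)"
      then obtain x'' where x'': "patB r x'' = GP r" "restrict x'' (Jset r) = fw r v w" "rgraph_iso (ballB r x'') \<alpha>"
        by (auto simp: Phi_def)
      show "rgraph_iso (ballZ r (w, v)) \<alpha>" using iso_Z(1)[OF g w x''(1,2)] x''(3) rgraph_iso_trans by blast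
    }
  qed
  also have "card {w \<in> Om. Phi r \<alpha> (fw r v w)}
      = card {f \<in> PiE (Jset r) (\<lambda>_. UNIV). Phi r \<alpha> f} * 2 ^ (card {..<n} - card (Jset r))"
    unfolding Om_def fw_def by (rule count_pull[OF _ p_inj[OF g]]) simp
  finally show ?thesis by simp
qed

end

lemma card_prod_split:
  assumes "finite A" "finite V"
  shows "card {z \<in> A \<times> V. P z} = (\<Sum>v\<in>V. card {w \<in> A. P (w, v)})"
proof -
  have eq: "{z \<in> A \<times> V. P z} = (\<Union>v\<in>V. (\<lambda>w. (w, v)) ` {w \<in> A. P (w, v)})" by auto
  have "card (\<Union>v\<in>V. (\<lambda>w. (w, v)) ` {w \<in> A. P (w, v)}) = (\<Sum>v\<in>V. card ((\<lambda>w. (w, v)) ` {w \<in> A. P (w, v)}))"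
    using assms by (intro card_UN_disjoint) auto
  also have "\<dots> = (\<Sum>v\<in>V. card {w \<in> A. P (w, v)})"
    by (intro sum.cong refl card_image) (auto simp: inj_on_def)
  finally show ?thesis using eq by simp
qed

context fin_setup
begin

lemma card_Om: "card Om = 2 ^ n"
  by (simp add: Om_def card_PiE)

lemma finite_Om: "finite Om"
  by (simp add: Om_def finite_PiE)

lemma p_meas_01: "0 \<le> p_meas r T \<alpha>" "p_meas r T \<alpha> \<le> 1"
  unfolding p_meas_def using prob_space.prob_le_1[OF prob_cantor] by (auto simp: measure_nonneg)

lemma good_term:
  assumes g: "good r v"
  shows "real (card {w \<in> Om. rgraph_iso (ballZ r (w, v)) \<alpha>}) / 2 ^ n = p_meas r (\<lambda>i. bshift G e (s i)) \<alpha>"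
proof -
  have J: "card (Jset r) \<le> n" using cardJ_le[OF g] .
  have c: "card {w \<in> Om. rgraph_iso (ballZ r (w, v)) \<alpha>}
      = card {f \<in> PiE (Jset r) (\<lambda>_. UNIV). Phi r \<alpha> f} * 2 ^ (n - card (Jset r))"
    by (rule count_v[OF g])
  have "real (card {w \<in> Om. rgraph_iso (ballZ r (w, v)) \<alpha>})
      = real (card {f \<in> PiE (Jset r) (\<lambda>_. UNIV). Phi r \<alpha> f}) * 2 ^ (n - card (Jset r))"
    unfolding c by (simp only: of_nat_mult of_nat_power) simp
  moreover have "(2::real) ^ n = 2 ^ (n - card (Jset r)) * 2 ^ card (Jset r)"
    using J by (simp flip: power_add)
  ultimately show ?thesis by (simp add: p_meas_eq)
qed

lemma p_fin_bound:
  assumes n: "n > 0" and bad: "card {v \<in> {..<n}. \<not> good r v} \<le> B"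
  shows "\<bar>p_fin r Zs TZ LZ \<alpha> - p_meas r (\<lambda>i. bshift G e (s i)) \<alpha>\<bar> \<le> B / n"
proof -
  let ?q = "p_meas r (\<lambda>i. bshift G e (s i)) \<alpha>"
  define N where "N v = card {w \<in> Om. rgraph_iso (ballZ r (w, v)) \<alpha>}" for v
  have cZ: "card Zs = 2 ^ n * n" by (simp add: Zs_def card_Om card_cartesian_product)
  have num: "card {z \<in> Zs. rgraph_iso (ball_graph r Zs TZ LZ z) \<alpha>} = (\<Sum>v<n. N v)"
  proof -
    have "{z \<in> Zs. rgraph_iso (ball_graph r Zs TZ LZ z) \<alpha>} = {z \<in> Om \<times> {..<n}. rgraph_iso (ballZ r z) \<alpha>}"
      by (simp add: Zs_def ballZ_def)
    then show ?thesis
      using card_prod_split[OF finite_Om finite_lessThan[of n], of "\<lambda>z. rgraph_iso (ballZ r z) \<alpha>"]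
      by (simp add: N_def)
  qed
  have Nle: "N v \<le> 2 ^ n" for v
    unfolding N_def using card_mono[OF finite_Om, of "{w \<in> Om. rgraph_iso (ballZ r (w, v)) \<alpha>}"] card_Om by auto
  define t where "t v = real (N v) / 2 ^ n - ?q" for v
  have t_good: "good r v \<Longrightarrow> t v = 0" for v using good_term by (simp add: t_def N_def)
  have t_le: "\<bar>t v\<bar> \<le> 1" for v
  proof -
    have "real (N v) \<le> real ((2::nat) ^ n)" using Nle[of v] by (simp only: of_nat_le_iff)
    then have a: "real (N v) / 2 ^ n \<le> 1" by simp
    have b: "0 \<le> real (N v) / 2 ^ n" by simp
    have q: "0 \<le> ?q" "?q \<le> 1" using p_meas_01[of r "\<lambda>i. bshift G e (s i)" \<alpha>] by auto
    show ?thesis unfolding t_def abs_le_iff using a b q by linarith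
  qed
  have "p_fin r Zs TZ LZ \<alpha> = (\<Sum>v<n. real (N v)) / (2 ^ n * n)"
    by (simp add: p_fin_def num cZ)
  also have "\<dots> = (\<Sum>v<n. t v + ?q) / n"
    by (simp add: t_def sum_divide_distrib[symmetric] divide_divide_eq_left mult.commute)
  also have "\<dots> = (\<Sum>v<n. t v) / n + ?q"
    using n by (simp add: sum.distrib add_divide_distrib)
  finally have eq: "p_fin r Zs TZ LZ \<alpha> - ?q = (\<Sum>v<n. t v) / n" by simp
  have "\<bar>\<Sum>v<n. t v\<bar> \<le> (\<Sum>v<n. \<bar>t v\<bar>)" by (rule sum_abs)
  also have "\<dots> \<le> (\<Sum>v<n. if good r v then 0 else 1)"
    by (intro sum_mono) (auto simp: t_good t_le)
  also have "\<dots> = real (card {v \<in> {..<n}. \<not> good r v})"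
    by (simp add: sum.If_cases Int_def)
  also have "\<dots> \<le> B" using bad by simp
  finally have "\<bar>\<Sum>v<n. t v\<bar> \<le> B" .
  then show ?thesis unfolding eq using n by (simp add: divide_right_mono)
qed

lemma bad_bound:
  assumes K: "Kset r \<subseteq> F" and F: "F \<subseteq> carrier G"
    and h1: "\<forall>a\<in>F. \<forall>b\<in>F. real (card {k\<in>{..<n}. (\<phi> a \<circ> \<phi> b \<circ> inv_into UNIV (\<phi> (a \<otimes> b))) k = k}) \<ge> (1 - \<epsilon>) * real n"
    and h2: "\<forall>a\<in>F. a \<noteq> \<one> \<longrightarrow> real (card {k\<in>{..<n}. \<phi> a k = k}) \<le> \<epsilon> * real n"
    and eps: "0 \<le> \<epsilon>"
  shows "real (card {v \<in> {..<n}. \<not> good r v}) \<le> (real (card (Kset r)) ^ 2 + real (card (Kset r))) * \<epsilon> * real n"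
proof -
  let ?K = "Kset r"
  define B1 where "B1 p = {v \<in> {..<n}. \<phi> (fst p) (\<phi> (snd p) v) \<noteq> \<phi> (fst p \<otimes> snd p) v}" for p
  define B2 where "B2 a = {v \<in> {..<n}. \<phi> a v = v}" for a
  have sub: "{v \<in> {..<n}. \<not> good r v} \<subseteq> (\<Union>p\<in>?K \<times> ?K. B1 p) \<union> (\<Union>a\<in>{a\<in>?K. a \<noteq> \<one>}. B2 a)"
    by (auto simp: good_def B1_def B2_def)
  have fK: "finite ?K" by (rule finite_Kset)
  have cB1: "real (card (B1 p)) \<le> \<epsilon> * n" if p: "p \<in> ?K \<times> ?K" for p
  proof -
    obtain a b where ab: "p = (a, b)" "a \<in> F" "b \<in> F" using p K by auto
    have ac: "a \<in> carrier G" "b \<in> carrier G" "a \<otimes> b \<in> carrier G" using ab F by auto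
    let ?c = "\<phi> (a \<otimes> b)"
    have perm: "?c permutes {..<n}" using phi_perm ac(3) .
    let ?E = "{v \<in> {..<n}. \<phi> a (\<phi> b v) = ?c v}"
    let ?Fx = "{k\<in>{..<n}. (\<phi> a \<circ> \<phi> b \<circ> inv_into UNIV ?c) k = k}"
    have "?c ` ?E = ?Fx"
    proof (intro equalityI subsetI)
      fix k assume "k \<in> ?c ` ?E"
      then obtain v where v: "v \<in> ?E" "k = ?c v" by blast
      have "inv_into UNIV ?c k = v" using v(2) permutes_inverses(2)[OF perm] by simp
      then show "k \<in> ?Fx" using v permutes_in_image[OF perm] by auto
    next
      fix k assume k: "k \<in> ?Fx"
      let ?v = "inv_into UNIV ?c k"
      have "?c ?v = k" using permutes_inverses(1)[OF perm] by simp
      moreover have "?v < n" using k permutes_in_image[OF permutes_inv[OF perm]] by auto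
      ultimately show "k \<in> ?c ` ?E" using k by (auto intro!: image_eqI[of _ _ ?v])
    qed
    then have "card ?Fx = card ?E"
      using card_image[OF inj_on_subset[OF permutes_inj[OF perm] subset_UNIV]] by metis
    moreover have "card (B1 p) = n - card ?E"
    proof -
      have "B1 p = {..<n} - ?E" by (auto simp: B1_def ab)
      moreover have "card ({..<n} - ?E) = n - card ?E" by (subst card_Diff_subset) auto
      ultimately show ?thesis by simp
    qed
    moreover have "card ?E \<le> n" using card_mono[of "{..<n}" ?E] by auto
    moreover have "real (card ?Fx) \<ge> (1 - \<epsilon>) * n" using h1 ab by auto
    ultimately show ?thesis by (simp add: of_nat_diff algebra_simps)
  qed
  have cB2: "real (card (B2 a)) \<le> \<epsilon> * n" if a: "a \<in> {a\<in>?K. a \<noteq> \<one>}" for a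
    using h2 a K by (auto simp: B2_def)
  have "card {v \<in> {..<n}. \<not> good r v} \<le> card ((\<Union>p\<in>?K \<times> ?K. B1 p) \<union> (\<Union>a\<in>{a\<in>?K. a \<noteq> \<one>}. B2 a))"
  proof -
    have "(\<Union>p\<in>?K \<times> ?K. B1 p) \<union> (\<Union>a\<in>{a\<in>?K. a \<noteq> \<one>}. B2 a) \<subseteq> {..<n}"
      by (auto simp: B1_def B2_def)
    from card_mono[OF finite_subset[OF this finite_lessThan] sub] show ?thesis .
  qed
  also have "\<dots> \<le> card (\<Union>p\<in>?K \<times> ?K. B1 p) + card (\<Union>a\<in>{a\<in>?K. a \<noteq> \<one>}. B2 a)"
    by (rule card_Un_le)
  also have "\<dots> \<le> (\<Sum>p\<in>?K \<times> ?K. card (B1 p)) + (\<Sum>a\<in>{a\<in>?K. a \<noteq> \<one>}. card (B2 a))"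
    using fK by (intro add_mono card_UN_le) auto
  finally have "real (card {v \<in> {..<n}. \<not> good r v})
      \<le> (\<Sum>p\<in>?K \<times> ?K. real (card (B1 p))) + (\<Sum>a\<in>{a\<in>?K. a \<noteq> \<one>}. real (card (B2 a)))"
    by (simp flip: of_nat_sum of_nat_add)
  also have "\<dots> \<le> (\<Sum>p\<in>?K \<times> ?K. \<epsilon> * n) + (\<Sum>a\<in>{a\<in>?K. a \<noteq> \<one>}. \<epsilon> * n)"
    using cB1 cB2 by (intro add_mono sum_mono) auto
  also have "\<dots> = real (card (?K \<times> ?K)) * (\<epsilon> * n) + real (card {a\<in>?K. a \<noteq> \<one>}) * (\<epsilon> * n)"
    by simp
  also have "\<dots> \<le> real (card ?K) ^ 2 * (\<epsilon> * n) + real (card ?K) * (\<epsilon> * n)"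
  proof -
    have e0: "0 \<le> \<epsilon> * n" using eps by simp
    have "card {a\<in>?K. a \<noteq> \<one>} \<le> card ?K" using fK by (intro card_mono) auto
    then have "real (card {a\<in>?K. a \<noteq> \<one>}) * (\<epsilon> * n) \<le> real (card ?K) * (\<epsilon> * n)"
      using e0 by (intro mult_right_mono) auto
    moreover have "real (card (?K \<times> ?K)) = real (card ?K) ^ 2" by (simp add: card_cartesian_product power2_eq_square)
    ultimately show ?thesis by simp
  qed
  finally show ?thesis by (simp add: algebra_simps)
qed

end

lemma eps_lim: "(\<lambda>m. 1 / (real m + 2)) \<longlonglongrightarrow> (0::real)"
proof -
  have "(\<lambda>m. inverse (real (Suc (Suc m)))) \<longlonglongrightarrow> (0::real)"
    using LIMSEQ_Suc[OF LIMSEQ_inverse_real_of_nat] .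
  moreover have "(\<lambda>m. inverse (real (Suc (Suc m)))) = (\<lambda>m. 1 / (real m + 2))"
    by (auto simp: divide_inverse add.commute)
  ultimately show ?thesis by simp
qed

lemma lim_from_bound:
  fixes a :: "nat \<Rightarrow> real"
  assumes b: "\<And>m. m \<ge> r \<Longrightarrow> \<bar>a m - L\<bar> \<le> C * (1 / (real m + 2))"
  shows "a \<longlonglongrightarrow> L"
proof (rule LIM_zero_cancel)
  have g: "(\<lambda>m. C * (1 / (real m + 2))) \<longlonglongrightarrow> 0"
    using tendsto_mult[OF tendsto_const eps_lim, of C] by simp
  show "(\<lambda>m. a m - L) \<longlonglongrightarrow> 0"
  proof (rule Lim_null_comparison[OF _ g])
    show "\<forall>\<^sub>F m in sequentially. norm (a m - L) \<le> C * (1 / (real m + 2))"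
      using b by (auto simp: eventually_sequentially)
  qed
qed

context bset
begin

lemma gw_append: "gw G s (u @ w) = gw G s w \<otimes> gw G s u" if "\<forall>a\<in>set u. fst a \<ge> 1" "\<forall>a\<in>set w. fst a \<ge> 1"
  using that
proof (induction u)
  case Nil then show ?case using gw_in[of w] by simp
next
  case (Cons a u)
  then show ?case using gw_in[of w] gw_in[of u] lt_in[of a] by (simp add: m_assoc)
qed

lemma gen_word: "g \<in> generate G (s ` {1..}) \<Longrightarrow> \<exists>w. (\<forall>a\<in>set w. fst a \<ge> 1) \<and> gw G s w = g"
proof (induction rule: generate.induct)
  case one then show ?case by (intro exI[of _ "[]"]) simp
next
  case (incl h)
  then obtain i where i: "i \<ge> 1" "h = s i" by auto
  show ?case using i s_in[OF i(1)] by (intro exI[of _ "[(i, True)]"]) (simp add: lt_def)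
next
  case (inv h)
  then obtain i where i: "i \<ge> 1" "h = s i" by auto
  show ?case using i s_in[OF i(1)] by (intro exI[of _ "[(i, False)]"]) (simp add: lt_def)
next
  case (eng h1 h2)
  then obtain w1 w2 where w: "\<forall>a\<in>set w1. fst a \<ge> 1" "gw G s w1 = h1" "\<forall>a\<in>set w2. fst a \<ge> 1" "gw G s w2 = h2"
    by blast
  show ?case using w gw_append[of w2 w1] by (intro exI[of _ "w2 @ w1"]) auto
qed

lemma orbit_eq:
  assumes gen: "generate G (s ` {1..}) = carrier G"
  shows "orbit_rel (\<lambda>i. bshift G e (s i)) = {(x, y). \<exists>g\<in>carrier G. y = bshift G e g x}"
proof (intro equalityI subsetI)
  fix p assume "p \<in> orbit_rel (\<lambda>i. bshift G e (s i))"
  then obtain x y w where p: "p = (x, y)" "\<forall>a\<in>set w. fst a \<ge> 1" "y = act_word UNIV (\<lambda>i. bshift G e (s i)) w x"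
    by (auto simp: orbit_rel_def)
  then show "p \<in> {(x, y). \<exists>g\<in>carrier G. y = bshift G e g x}"
    using act_bsh[OF p(2)] gw_in[OF p(2)] by auto
next
  fix p assume "p \<in> {(x, y). \<exists>g\<in>carrier G. y = bshift G e g x}"
  then obtain x y g where p: "p = (x, y)" "g \<in> carrier G" "y = bshift G e g x" by auto
  obtain w where w: "\<forall>a\<in>set w. fst a \<ge> 1" "gw G s w = g" using gen_word p(2) gen by blast
  show "p \<in> orbit_rel (\<lambda>i. bshift G e (s i))"
    using p w act_bsh[OF w(1)] by (auto simp: orbit_rel_def)
qed

lemma sofic_shift:
  assumes sg: "sofic_group G"
  shows "sofic_action (\<lambda>i. bshift G e (s i))"
proof -
  define eps where "eps m = 1 / (real m + 2)" for m :: nat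
  define FF where "FF m = (\<Union>r\<in>{..m}. Kset r)" for m
  have FFfin: "finite (FF m)" for m by (simp add: FF_def finite_Kset)
  have FFsub: "FF m \<subseteq> carrier G" for m using Kset_in by (auto simp: FF_def)
  have Kin: "r \<le> m \<Longrightarrow> Kset r \<subseteq> FF m" for r m by (auto simp: FF_def)
  have eps01: "0 < eps m" "eps m < 1" for m by (auto simp: eps_def)
  define P where "P m n (\<phi> :: 'a \<Rightarrow> nat \<Rightarrow> nat) \<longleftrightarrow> n > 0 \<and> (\<forall>g\<in>carrier G. \<phi> g permutes {..<n}) \<and> \<phi> \<one> = id \<and>
       (\<forall>a\<in>FF m. \<forall>b\<in>FF m. real (card {k\<in>{..<n}. (\<phi> a \<circ> \<phi> b \<circ> inv_into UNIV (\<phi> (a \<otimes> b))) k = k}) \<ge> (1 - eps m) * real n) \<and>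
       (\<forall>a\<in>FF m. a \<noteq> \<one> \<longrightarrow> real (card {k\<in>{..<n}. \<phi> a k = k}) \<le> eps m * real n)" for m n \<phi>
  have ex: "\<exists>p. P m (fst p) (snd p)" for m
  proof -
    have "\<exists>n. n > 0 \<and> (\<exists>\<phi> :: 'a \<Rightarrow> nat \<Rightarrow> nat. (\<forall>g\<in>carrier G. \<phi> g permutes {..<n}) \<and> \<phi> \<one> = id \<and>
       (\<forall>a\<in>FF m. \<forall>b\<in>FF m. real (card {k\<in>{..<n}. (\<phi> a \<circ> \<phi> b \<circ> inv_into UNIV (\<phi> (a \<otimes> b))) k = k}) \<ge> (1 - eps m) * real n) \<and>
       (\<forall>a\<in>FF m. a \<noteq> \<one> \<longrightarrow> real (card {k\<in>{..<n}. \<phi> a k = k}) \<le> eps m * real n))"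
      using sg eps01[of m] FFfin[of m] FFsub[of m] unfolding sofic_group_def by blast
    then show ?thesis unfolding P_def by auto
  qed
  have "\<forall>m. \<exists>p. P m (fst p) (snd p)" using ex by blast
  from choice[OF this] obtain f where f: "\<And>m. P m (fst (f m)) (snd (f m))" by blast
  define NN where "NN m = fst (f m)" for m
  define PH where "PH m = snd (f m)" for m
  have H: "P m (NN m) (PH m)" for m using f by (simp add: NN_def PH_def)
  have FS: "fin_setup G e s (NN m) (PH m)" for m
    using H[of m] bset_axioms unfolding fin_setup_def fin_setup_axioms_def P_def by auto
  have NN0: "NN m > 0" for m using H[of m] by (simp add: P_def)
  define Z where "Z m = fin_setup.Zs (NN m)" for m
  have Zfin: "finite (Z m)" for m
    using fin_setup.finite_Om[OF FS] by (simp add: Z_def fin_setup.Zs_def[OF FS])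
  have Zcard: "card (Z m) > 0" for m
    using fin_setup.card_Om[OF FS] NN0[of m] by (simp add: Z_def fin_setup.Zs_def[OF FS] card_cartesian_product)
  have "\<forall>m. \<exists>h. bij_betw h (Z m) {0..<card (Z m)}" using ex_bij_betw_finite_nat[OF Zfin] by blast
  from choice[OF this] obtain enc where enc: "\<And>m. bij_betw (enc m) (Z m) {0..<card (Z m)}" by blast
  define Y where "Y m = {0..<card (Z m)}" for m
  define TZm where "TZm m = fin_setup.TZ G s (PH m)" for m
  define LZm where "LZm m = fin_setup.LZ G e (PH m)" for m
  define TT where "TT m i y = enc m (TZm m i (inv_into (Z m) (enc m) y))" for m i y
  define L where "L m y = LZm m (inv_into (Z m) (enc m) y)" for m y
  have encY: "bij_betw (enc m) (Z m) (Y m)" for m using enc by (simp add: Y_def)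
  have TZb: "i \<ge> 1 \<Longrightarrow> bij_betw (TZm m i) (Z m) (Z m)" for m i
    using fin_setup.TZ_bij[OF FS] by (simp add: TZm_def Z_def)
  show ?thesis unfolding sofic_action_def
  proof (intro conjI exI[of _ Y] exI[of _ TT] exI[of _ L] allI impI)
    show "mp_borel_action (\<lambda>i. bshift G e (s i))" by (rule mp_action)
  next
    fix m
    show "finite (Y m)" by (simp add: Y_def)
    show "Y m \<noteq> {}" using Zcard[of m] by (simp add: Y_def)
    fix i :: nat assume i: "1 \<le> i"
    have "bij_betw (enc m \<circ> TZm m i \<circ> inv_into (Z m) (enc m)) (Y m) (Y m)"
      using bij_betw_trans[OF bij_betw_trans[OF bij_betw_inv_into[OF encY] TZb[OF i]] encY] by (simp add: comp_assoc)
    moreover have "enc m \<circ> TZm m i \<circ> inv_into (Z m) (enc m) = TT m i" by (auto simp: TT_def)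
    ultimately show "bij_betw (TT m i) (Y m) (Y m)" by simp
  next
    fix r :: nat and \<alpha> :: "nat rgraph" assume r: "1 \<le> r"
    let ?K = "real (card (Kset r))"
    have tr: "p_fin r (Y m) (TT m) (L m) \<alpha> = p_fin r (Z m) (TZm m) (LZm m) \<alpha>" for m
      by (rule transport_p_fin[OF encY]) (auto simp: TZb TT_def L_def)
    show "(\<lambda>m. p_fin r (Y m) (TT m) (L m) \<alpha>) \<longlonglongrightarrow> p_meas r (\<lambda>i. bshift G e (s i)) \<alpha>"
      unfolding tr
    proof (rule lim_from_bound[where r=r and C="?K ^ 2 + ?K"])
      fix m assume m: "m \<ge> r"
      let ?bad = "card {v \<in> {..<NN m}. \<not> fin_setup.good G e s (NN m) (PH m) r v}"
      have hm: "\<forall>a\<in>FF m. \<forall>b\<in>FF m. real (card {k\<in>{..<NN m}. (PH m a \<circ> PH m b \<circ> inv_into UNIV (PH m (a \<otimes> b))) k = k}) \<ge> (1 - eps m) * real (NN m)"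
        "\<forall>a\<in>FF m. a \<noteq> \<one> \<longrightarrow> real (card {k\<in>{..<NN m}. PH m a k = k}) \<le> eps m * real (NN m)"
        using H[of m] by (auto simp: P_def)
      have bb: "real ?bad \<le> (?K ^ 2 + ?K) * eps m * real (NN m)"
        using fin_setup.bad_bound[OF FS Kin[OF m] FFsub hm(1) hm(2)] eps01[of m] by simp
      have pb: "\<bar>p_fin r (Z m) (TZm m) (LZm m) \<alpha> - p_meas r (\<lambda>i. bshift G e (s i)) \<alpha>\<bar> \<le> real ?bad / real (NN m)"
        using fin_setup.p_fin_bound[OF FS NN0 order.refl] by (simp add: Z_def TZm_def LZm_def)
      also have "\<dots> \<le> (?K ^ 2 + ?K) * eps m"
        using bb NN0[of m] by (simp add: divide_le_eq)
      finally show "\<bar>p_fin r (Z m) (TZm m) (LZm m) \<alpha> - p_meas r (\<lambda>i. bshift G e (s i)) \<alpha>\<bar> \<le> (?K ^ 2 + ?K) * (1 / (real m + 2))"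
        by (simp add: eps_def)
    qed
  qed
qed

end

theorem proposition7p1:
  fixes G :: "('a, 'b) monoid_scheme" and s :: "nat \<Rightarrow> 'a" and e :: "nat \<Rightarrow> 'a"
  assumes "group G"
    and "sofic_group G"
    and "bij_betw e UNIV (carrier G)"
    and "\<forall>i\<ge>1. s i \<in> carrier G"
    and "generate G (s ` {1..}) = carrier G"
  shows "sofic_action (\<lambda>i. bshift G e (s i)) \<and>
         sofic_eqrel {(x, y). \<exists>g\<in>carrier G. y = bshift G e g x}"
proof -
  interpret bset G e s
    using assms(1,3,4) by (intro bset.intro bset_axioms.intro) auto
  have A: "sofic_action (\<lambda>i. bshift G e (s i))" by (rule sofic_shift[OF assms(2)])
  show ?thesis unfolding sofic_eqrel_def using A orbit_eq[OF assms(5)] by blast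
qed

end
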